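(* Let $\mathcal C$ be an operadic category such that for each morphism $\theta:c\to e$ of $\mathcal C$ the functor $\theta/R_e:\theta/(\mathcal C/e)\to R_e(\theta)/\mathcal C^{|e|}$ has a weak right adjoint $S_\theta$ whose counit components (as morphisms of $\mathcal C^{|e|}$) are fibrewise trivial. Then the skew monoidal category $\mathrm{Coll}_{\mathcal C}^U$ (whose underlying category is equivalent to $[\mathbb C^{\mathrm{op}},\mathbf{Set}]$) is Hopf, i.e. its associativity map is invertible.
   Context: Operadic categories: $\mathcal S$ is a skeleton of finite sets, with fixed equivalences $R_I:\mathcal S/I\to\mathcal S^I$ sending $f:J\to I$ to its fibres. An operadic category is a category $\mathcal C$ with a functor $|\cdot|:\mathcal C\to\mathcal S$ and functors $R_c:\mathcal C/c\to\mathcal C^{|c|}$ with $|\cdot|^{|c|}\circ R_c=R_{|c|}\circ(|\cdot|/c)$; the fibre $\psi^{-1}i$ of $\psi:c\to d$ at $i\in|d|$ is the $i$-th component of $R_d(\psi)$; for $\varphi:b\to c,\psi:c\to d$, $\varphi^\psi=R_d(\varphi:\psi\varphi\to\psi)$ with components $\varphi^\psi_j:(\psi\varphi)^{-1}j\to\psi^{-1}j$; $u$ is trivial if $|u|=1$ and $R_u=\mathrm{dom}$. Axioms: fibres of identities are trivial; double slice condition: for $\psi:c\to d$, $R_c\circ(\mathrm{dom}/\psi)=(\cong)\circ(\prod_jR_{\psi^{-1}j})\circ(R_d/\psi)$ as functors $(\mathcal C/d)/\psi\to\mathcal C^{|c|}$, via $\mathcal C^{|d|}/R_d\psi\cong\prod_j\mathcal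 C/\psi^{-1}j$ and $|c|\cong\sum_j|\psi|^{-1}j$. A morphism of $\mathcal C$ is fibrewise trivial if all its fibres are trivial; a morphism of $\mathcal C^{|e|}$ is fibrewise trivial if each component is; the fibrewise trivial morphisms form a wide subcategory $\mathbb C$ of $\mathcal C$. For a functor $F:\mathcal A\to\mathcal B$ and $a\in\mathcal A$, $a/F:a/\mathcal A\to Fa/\mathcal B$ is the induced functor on coslices. Thus $\theta/R_e$ sends an object of $\theta/(\mathcal C/e)$, i.e. a factorization $\theta=\psi\varphi$ with $\varphi:c\to d,\psi:d\to e$, to $\varphi^\psi:R_e(\theta)\to R_e(\psi)$. A weak right adjoint to a functor $R:\mathcal A\to\mathcal B$ consists of, for each $B\in\mathcal B$, an object $SB\in\mathcal A$ and a morphism (counit component) $\sigma_B:RSB\to B$, such that for every $A\in\mathcal A$ and every $\tau:RA\to B$ there exists (not necessarily unique) $\pi:A\to SB$ with $\sigma_B\circ R\pi=\tau$. (The counit components of $S_\theta$ are morphisms of the coslice $R_e(\theta)/\mathcal C^{|e|}$, and the hypothesis is that their underlying morphisms in $\mathcal C^{|e|}$ are fibrewise trivial.) $\mathrm{Coll}_{\mathcal C}$ is the skew monoidal category with underlying category $\mathbf{Set}/C$ ($C$ = object set; $X_c=\partial^{-1}c$), tensor $(X*Y)_c=\sum_{\varphi:c\to d}X_d\times\prod_{i\in|d|}Y_{\varphi^{-1}i}$, unit $U$ the set of trivial objects, maps $\alpha(x,\psi,y,\varphi,z)=(x,\psi\varphi,y,\varphi^\psi,z)$, $\lambda(u,\varphi,x)=x$,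 $\rho(x)=(x,1_{\partial x},(1_{\partial x}^{-1}i)_i)$. $\mathrm{Coll}_{\mathcal C}^U$ is the category of right $U$-modules ($X$ with $r:X*U\to X$, $r(r*1)=r(1*\lambda)\alpha$, $r\rho=1$; equivalently presheaves on $\mathbb C$), with tensor $X\wedge Y$ the coequalizer $p:X*Y\to X\wedge Y$ of $r_X*1$ and $(1*\lambda)\alpha:(X*U)*Y\to X*Y$ (with induced action $r$ given by $r(p*1)=p(1*r_Y)\alpha$), unit $U$, and associativity $(X\wedge Y)\wedge Z\to X\wedge(Y\wedge Z)$ the map induced by $\alpha$ through the quotient maps (likewise for the unit maps). *)

theory Defs
  imports Main
begin

text \<open>The skeleton S of finite sets: the object n is the set {0..<n}; a morphism
n -> m is a function nat => nat (only its values on {0..<n} matter).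
The fixed equivalences R_I are the canonical ones: the fibre of f over i is
identified with {0..<card fibre} via the order-preserving enumeration.\<close>

definition sk_enum :: "(nat \<Rightarrow> nat) \<Rightarrow> nat \<Rightarrow> nat \<Rightarrow> nat \<Rightarrow> nat" where
  "sk_enum f m i k = sorted_list_of_set {j. j < m \<and> f j = i} ! k"

definition sk_rank :: "(nat \<Rightarrow> nat) \<Rightarrow> nat \<Rightarrow> nat \<Rightarrow> nat" where
  "sk_rank f i j = card {j'. j' < j \<and> f j' = i}"

text \<open>Data of an operadic category: a category (objects of type 'o, morphisms of
type 'm), the cardinality functor (crd on objects, crdm on morphisms), and the
fibre functors R_c: fib psi i is the i-th fibre of psi, and
fibm psi phi i is the i-th component of phi^psi = R_d(phi : psi phi -> psi).\<close>

record ('o, 'm) opcat =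
  ob :: "'o set"
  mor :: "'m set"
  src :: "'m \<Rightarrow> 'o"
  tgt :: "'m \<Rightarrow> 'o"
  cmp :: "'m \<Rightarrow> 'm \<Rightarrow> 'm"
  ide :: "'o \<Rightarrow> 'm"
  crd :: "'o \<Rightarrow> nat"
  crdm :: "'m \<Rightarrow> nat \<Rightarrow> nat"
  fib :: "'m \<Rightarrow> nat \<Rightarrow> 'o"
  fibm :: "'m \<Rightarrow> 'm \<Rightarrow> nat \<Rightarrow> 'm"

definition hom :: "('o, 'm, 'x) opcat_scheme \<Rightarrow> 'o \<Rightarrow> 'o \<Rightarrow> 'm set" where
  "hom C a b = {f \<in> mor C. src C f = a \<and> tgt C f = b}"

definition is_category :: "('o, 'm, 'x) opcat_scheme \<Rightarrow> bool" where
  "is_category C \<longleftrightarrow>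
    (\<forall>f\<in>mor C. src C f \<in> ob C \<and> tgt C f \<in> ob C) \<and>
    (\<forall>c\<in>ob C. ide C c \<in> hom C c c) \<and>
    (\<forall>f\<in>mor C. \<forall>g\<in>mor C. tgt C f = src C g \<longrightarrow>
        cmp C g f \<in> hom C (src C f) (tgt C g)) \<and>
    (\<forall>f\<in>mor C. cmp C f (ide C (src C f)) = f \<and> cmp C (ide C (tgt C f)) f = f) \<and>
    (\<forall>f\<in>mor C. \<forall>g\<in>mor C. \<forall>h\<in>mor C. tgt C f = src C g \<and> tgt C g = src C h \<longrightarrow>
        cmp C h (cmp C g f) = cmp C (cmp C h g) f)"

definition card_functor :: "('o, 'm, 'x) opcat_scheme \<Rightarrow> bool" where
  "card_functor C \<longleftrightarrow>
    (\<forall>f\<in>mor C. \<forall>j<crd C (src C f). crdm C f j < crd C (tgt C f)) \<and>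
    (\<forall>c\<in>ob C. \<forall>j<crd C c. crdm C (ide C c) j = j) \<and>
    (\<forall>f\<in>mor C. \<forall>g\<in>mor C. tgt C f = src C g \<longrightarrow>
        (\<forall>j<crd C (src C f). crdm C (cmp C g f) j = crdm C g (crdm C f j)))"

definition fibre_functors :: "('o, 'm, 'x) opcat_scheme \<Rightarrow> bool" where
  "fibre_functors C \<longleftrightarrow>
    (\<forall>\<psi>\<in>mor C. \<forall>i<crd C (tgt C \<psi>). fib C \<psi> i \<in> ob C) \<and>
    (\<forall>\<psi>\<in>mor C. \<forall>\<phi>\<in>mor C. tgt C \<phi> = src C \<psi> \<longrightarrow>
        (\<forall>i<crd C (tgt C \<psi>). fibm C \<psi> \<phi> i \<in> hom C (fib C (cmp C \<psi> \<phi>) i) (fib C \<psi> i))) \<and>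
    (\<forall>\<psi>\<in>mor C. \<forall>i<crd C (tgt C \<psi>). fibm C \<psi> (ide C (src C \<psi>)) i = ide C (fib C \<psi> i)) \<and>
    (\<forall>\<psi>\<in>mor C. \<forall>\<phi>\<in>mor C. \<forall>\<chi>\<in>mor C. tgt C \<chi> = src C \<phi> \<and> tgt C \<phi> = src C \<psi> \<longrightarrow>
        (\<forall>i<crd C (tgt C \<psi>).
           fibm C \<psi> (cmp C \<phi> \<chi>) i = cmp C (fibm C \<psi> \<phi> i) (fibm C (cmp C \<psi> \<phi>) \<chi> i)))"

text \<open>Compatibility |.|^{|c|} o R_c = R_{|c|} o (|.|/c).\<close>
definition card_compat :: "('o, 'm, 'x) opcat_scheme \<Rightarrow> bool" where
  "card_compat C \<longleftrightarrow>
    (\<forall>\<psi>\<in>mor C. \<forall>i<crd C (tgt C \<psi>).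
        crd C (fib C \<psi> i) = card {j. j < crd C (src C \<psi>) \<and> crdm C \<psi> j = i}) \<and>
    (\<forall>\<psi>\<in>mor C. \<forall>\<phi>\<in>mor C. tgt C \<phi> = src C \<psi> \<longrightarrow>
        (\<forall>i<crd C (tgt C \<psi>). \<forall>k<crd C (fib C (cmp C \<psi> \<phi>) i).
           crdm C (fibm C \<psi> \<phi> i) k =
             sk_rank (crdm C \<psi>) i
               (crdm C \<phi> (sk_enum (crdm C (cmp C \<psi> \<phi>)) (crd C (src C \<phi>)) i k))))"

definition trivial_ob :: "('o, 'm, 'x) opcat_scheme \<Rightarrow> 'o \<Rightarrow> bool" where
  "trivial_ob C u \<longleftrightarrow> u \<in> ob C \<and> crd C u = 1 \<and>
    (\<forall>\<psi>\<in>mor C. tgt C \<psi> = u \<longrightarrow> fib C \<psi> 0 = src C \<psi>) \<and>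
    (\<forall>\<psi>\<in>mor C. \<forall>\<phi>\<in>mor C. tgt C \<psi> = u \<and> tgt C \<phi> = src C \<psi> \<longrightarrow> fibm C \<psi> \<phi> 0 = \<phi>)"

text \<open>Double slice condition, with |c| = sum_j |psi|^{-1} j reindexed by
j |-> (|psi| j, rank of j in its fibre).\<close>
definition double_slice :: "('o, 'm, 'x) opcat_scheme \<Rightarrow> bool" where
  "double_slice C \<longleftrightarrow>
    (\<forall>\<psi>\<in>mor C. \<forall>\<phi>\<in>mor C. tgt C \<phi> = src C \<psi> \<longrightarrow>
       (\<forall>j<crd C (src C \<psi>).
          fib C \<phi> j = fib C (fibm C \<psi> \<phi> (crdm C \<psi> j)) (sk_rank (crdm C \<psi>) (crdm C \<psi> j) j))) \<and>
    (\<forall>\<psi>\<in>mor C. \<forall>\<phi>\<in>mor C. \<forall>\<chi>\<in>mor C. tgt C \<chi> = src C \<phi> \<and> tgt C \<phi> = src C \<psi> \<longrightarrow>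
       (\<forall>j<crd C (src C \<psi>).
          fibm C \<phi> \<chi> j =
            fibm C (fibm C \<psi> \<phi> (crdm C \<psi> j)) (fibm C (cmp C \<psi> \<phi>) \<chi> (crdm C \<psi> j))
                 (sk_rank (crdm C \<psi>) (crdm C \<psi> j) j)))"

definition operadic_category :: "('o, 'm, 'x) opcat_scheme \<Rightarrow> bool" where
  "operadic_category C \<longleftrightarrow>
    is_category C \<and> card_functor C \<and> fibre_functors C \<and> card_compat C \<and>
    (\<forall>c\<in>ob C. \<forall>i<crd C c. trivial_ob C (fib C (ide C c) i)) \<and>
    double_slice C"

definition fibrewise_trivial :: "('o, 'm, 'x) opcat_scheme \<Rightarrow> 'm \<Rightarrow> bool" where
  "fibrewise_trivial C f \<longleftrightarrow> (\<forall>k<crd C (tgt C f). trivial_ob C (fib C f k))"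

text \<open>An object of R_e(theta)/C^{|e|} is a pair
(x, tau) with tau_i : fib theta i -> x_i; S x tau = (phiB, psiB) is a factorisation
theta = psiB phiB; sigma x tau is the counit component.\<close>
definition weak_right_adjoint_hyp :: "('o, 'm, 'x) opcat_scheme \<Rightarrow> bool" where
  "weak_right_adjoint_hyp C \<longleftrightarrow>
   (\<forall>\<theta>\<in>mor C.
    \<exists>(S :: (nat \<Rightarrow> 'o) \<Rightarrow> (nat \<Rightarrow> 'm) \<Rightarrow> 'm \<times> 'm) (\<sigma> :: (nat \<Rightarrow> 'o) \<Rightarrow> (nat \<Rightarrow> 'm) \<Rightarrow> nat \<Rightarrow> 'm).
     \<forall>x \<tau>. (\<forall>i<crd C (tgt C \<theta>). x i \<in> ob C \<and> \<tau> i \<in> hom C (fib C \<theta> i) (x i)) \<longrightarrow>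
       (let \<phi>B = fst (S x \<tau>); \<psi>B = snd (S x \<tau>) in
         \<phi>B \<in> mor C \<and> \<psi>B \<in> mor C \<and> src C \<phi>B = src C \<theta> \<and> tgt C \<phi>B = src C \<psi>B \<and>
         tgt C \<psi>B = tgt C \<theta> \<and> cmp C \<psi>B \<phi>B = \<theta> \<and>
         (\<forall>i<crd C (tgt C \<theta>).
            \<sigma> x \<tau> i \<in> hom C (fib C \<psi>B i) (x i) \<and>
            cmp C (\<sigma> x \<tau> i) (fibm C \<psi>B \<phi>B i) = \<tau> i \<and>
            fibrewise_trivial C (\<sigma> x \<tau> i)) \<and>
         (\<forall>\<phi>\<in>mor C. \<forall>\<psi>\<in>mor C. \<forall>g.
            src C \<phi> = src C \<theta> \<and> tgt C \<phi> = src C \<psi> \<and> tgt C \<psi> = tgt C \<theta> \<and>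
            cmp C \<psi> \<phi> = \<theta> \<and>
            (\<forall>i<crd C (tgt C \<theta>). g i \<in> hom C (fib C \<psi> i) (x i) \<and>
                                    cmp C (g i) (fibm C \<psi> \<phi> i) = \<tau> i) \<longrightarrow>
            (\<exists>\<kappa>\<in>hom C (src C \<psi>) (src C \<psi>B).
               cmp C \<psi>B \<kappa> = \<psi> \<and> cmp C \<kappa> \<phi> = \<phi>B \<and>
               (\<forall>i<crd C (tgt C \<theta>). cmp C (\<sigma> x \<tau> i) (fibm C \<psi>B \<kappa> i) = g i)))))"

text \<open>An object of Set/C is a set X with a map dX : X -> C.  Elements of X*Y are
triples (x, phi, ys) with phi : c -> d, x in X_d, ys i in Y_{phi^-1 i} for i < |d|
(ys extended by undefined elsewhere); their degree is c.\<close>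

definition tens :: "('o, 'm, 'x) opcat_scheme \<Rightarrow> 'a set \<Rightarrow> ('a \<Rightarrow> 'o) \<Rightarrow> 'b set \<Rightarrow> ('b \<Rightarrow> 'o)
    \<Rightarrow> ('a \<times> 'm \<times> (nat \<Rightarrow> 'b)) set" where
  "tens C X dX Y dY = {(x, \<phi>, ys). \<phi> \<in> mor C \<and> x \<in> X \<and> dX x = tgt C \<phi> \<and>
      (\<forall>i<crd C (tgt C \<phi>). ys i \<in> Y \<and> dY (ys i) = fib C \<phi> i) \<and>
      (\<forall>i. crd C (tgt C \<phi>) \<le> i \<longrightarrow> ys i = undefined)}"

definition tdeg :: "('o, 'm, 'x) opcat_scheme \<Rightarrow> ('a \<times> 'm \<times> (nat \<Rightarrow> 'b)) \<Rightarrow> 'o" where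
  "tdeg C w = (case w of (x, \<phi>, ys) \<Rightarrow> src C \<phi>)"

definition tmap :: "('o, 'm, 'x) opcat_scheme \<Rightarrow> ('a \<Rightarrow> 'a2) \<Rightarrow> ('b \<Rightarrow> 'b2)
    \<Rightarrow> ('a \<times> 'm \<times> (nat \<Rightarrow> 'b)) \<Rightarrow> ('a2 \<times> 'm \<times> (nat \<Rightarrow> 'b2))" where
  "tmap C f g w = (case w of (x, \<phi>, ys) \<Rightarrow>
      (f x, \<phi>, \<lambda>i. if i < crd C (tgt C \<phi>) then g (ys i) else undefined))"

text \<open>The unit U: the set of trivial objects, with degree map the identity.\<close>
definition unitU :: "('o, 'm, 'x) opcat_scheme \<Rightarrow> 'o set" where
  "unitU C = {u. trivial_ob C u}"

definition assoc :: "('o, 'm, 'x) opcat_scheme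
    \<Rightarrow> (('a \<times> 'm \<times> (nat \<Rightarrow> 'b)) \<times> 'm \<times> (nat \<Rightarrow> 'c))
    \<Rightarrow> ('a \<times> 'm \<times> (nat \<Rightarrow> ('b \<times> 'm \<times> (nat \<Rightarrow> 'c))))" where
  "assoc C w = (case w of ((x, \<psi>, ys), \<phi>, zs) \<Rightarrow>
      (x, cmp C \<psi> \<phi>,
       \<lambda>i. if i < crd C (tgt C \<psi>) then
              (ys i, fibm C \<psi> \<phi> i,
               \<lambda>k. if k < crd C (fib C \<psi> i)
                   then zs (sk_enum (crdm C \<psi>) (crd C (src C \<psi>)) i k) else undefined)
            else undefined))"

definition lunit :: "('o \<times> 'm \<times> (nat \<Rightarrow> 'b)) \<Rightarrow> 'b" where
  "lunit w = (case w of (u, \<phi>, xs) \<Rightarrow> xs 0)"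

definition runit :: "('o, 'm, 'x) opcat_scheme \<Rightarrow> ('a \<Rightarrow> 'o) \<Rightarrow> 'a \<Rightarrow> ('a \<times> 'm \<times> (nat \<Rightarrow> 'o))" where
  "runit C dX x = (x, ide C (dX x),
      \<lambda>i. if i < crd C (dX x) then fib C (ide C (dX x)) i else undefined)"

definition rmodule :: "('o, 'm, 'x) opcat_scheme \<Rightarrow> 'a set \<Rightarrow> ('a \<Rightarrow> 'o)
    \<Rightarrow> (('a \<times> 'm \<times> (nat \<Rightarrow> 'o)) \<Rightarrow> 'a) \<Rightarrow> bool" where
  "rmodule C X dX r \<longleftrightarrow>
    (\<forall>x\<in>X. dX x \<in> ob C) \<and>
    (\<forall>w\<in>tens C X dX (unitU C) id. r w \<in> X \<and> dX (r w) = tdeg C w) \<and>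
    (\<forall>w\<in>tens C (tens C X dX (unitU C) id) (tdeg C) (unitU C) id.
        r (tmap C r id w) = r (tmap C id lunit (assoc C w))) \<and>
    (\<forall>x\<in>X. r (runit C dX x) = x)"

definition smash_gen :: "('o, 'm, 'x) opcat_scheme \<Rightarrow> 'a set \<Rightarrow> ('a \<Rightarrow> 'o)
    \<Rightarrow> (('a \<times> 'm \<times> (nat \<Rightarrow> 'o)) \<Rightarrow> 'a) \<Rightarrow> 'b set \<Rightarrow> ('b \<Rightarrow> 'o)
    \<Rightarrow> (('a \<times> 'm \<times> (nat \<Rightarrow> 'b)) \<times> ('a \<times> 'm \<times> (nat \<Rightarrow> 'b))) set" where
  "smash_gen C X dX rX Y dY =
     {(tmap C rX id w, tmap C id lunit (assoc C w)) | w.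
        w \<in> tens C (tens C X dX (unitU C) id) (tdeg C) Y dY}"

definition smash_eq :: "('o, 'm, 'x) opcat_scheme \<Rightarrow> 'a set \<Rightarrow> ('a \<Rightarrow> 'o)
    \<Rightarrow> (('a \<times> 'm \<times> (nat \<Rightarrow> 'o)) \<Rightarrow> 'a) \<Rightarrow> 'b set \<Rightarrow> ('b \<Rightarrow> 'o)
    \<Rightarrow> (('a \<times> 'm \<times> (nat \<Rightarrow> 'b)) \<times> ('a \<times> 'm \<times> (nat \<Rightarrow> 'b))) set" where
  "smash_eq C X dX rX Y dY = (smash_gen C X dX rX Y dY \<union> (smash_gen C X dX rX Y dY)\<inverse>)\<^sup>*"

definition smash :: "('o, 'm, 'x) opcat_scheme \<Rightarrow> 'a set \<Rightarrow> ('a \<Rightarrow> 'o)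
    \<Rightarrow> (('a \<times> 'm \<times> (nat \<Rightarrow> 'o)) \<Rightarrow> 'a) \<Rightarrow> 'b set \<Rightarrow> ('b \<Rightarrow> 'o)
    \<Rightarrow> ('a \<times> 'm \<times> (nat \<Rightarrow> 'b)) set set" where
  "smash C X dX rX Y dY = tens C X dX Y dY // smash_eq C X dX rX Y dY"

definition smash_q :: "('o, 'm, 'x) opcat_scheme \<Rightarrow> 'a set \<Rightarrow> ('a \<Rightarrow> 'o)
    \<Rightarrow> (('a \<times> 'm \<times> (nat \<Rightarrow> 'o)) \<Rightarrow> 'a) \<Rightarrow> 'b set \<Rightarrow> ('b \<Rightarrow> 'o)
    \<Rightarrow> ('a \<times> 'm \<times> (nat \<Rightarrow> 'b)) \<Rightarrow> ('a \<times> 'm \<times> (nat \<Rightarrow> 'b)) set" where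
  "smash_q C X dX rX Y dY w = smash_eq C X dX rX Y dY `` {w}"

definition smash_deg :: "('o, 'm, 'x) opcat_scheme \<Rightarrow> ('a \<times> 'm \<times> (nat \<Rightarrow> 'b)) set \<Rightarrow> 'o" where
  "smash_deg C Q = tdeg C (SOME w. w \<in> Q)"

text \<open>The induced right action on X /\ Y:  r (p * 1) = p (1 * r_Y) alpha.\<close>
definition smash_act :: "('o, 'm, 'x) opcat_scheme \<Rightarrow> 'a set \<Rightarrow> ('a \<Rightarrow> 'o)
    \<Rightarrow> (('a \<times> 'm \<times> (nat \<Rightarrow> 'o)) \<Rightarrow> 'a) \<Rightarrow> 'b set \<Rightarrow> ('b \<Rightarrow> 'o)
    \<Rightarrow> (('b \<times> 'm \<times> (nat \<Rightarrow> 'o)) \<Rightarrow> 'b)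
    \<Rightarrow> (('a \<times> 'm \<times> (nat \<Rightarrow> 'b)) set \<times> 'm \<times> (nat \<Rightarrow> 'o)) \<Rightarrow> ('a \<times> 'm \<times> (nat \<Rightarrow> 'b)) set" where
  "smash_act C X dX rX Y dY rY v = (case v of (Q, \<phi>, us) \<Rightarrow>
      smash_q C X dX rX Y dY (tmap C id rY (assoc C ((SOME w. w \<in> Q), \<phi>, us))))"

text \<open>The associativity map (X /\ Y) /\ Z -> X /\ (Y /\ Z), induced by alpha through
the quotient maps: a (p (p * 1)) = p (1 * p) alpha.  It is evaluated on chosen
representatives.\<close>
definition smash_assoc :: "('o, 'm, 'x) opcat_scheme
    \<Rightarrow> 'a set \<Rightarrow> ('a \<Rightarrow> 'o) \<Rightarrow> (('a \<times> 'm \<times> (nat \<Rightarrow> 'o)) \<Rightarrow> 'a)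
    \<Rightarrow> 'b set \<Rightarrow> ('b \<Rightarrow> 'o) \<Rightarrow> (('b \<times> 'm \<times> (nat \<Rightarrow> 'o)) \<Rightarrow> 'b)
    \<Rightarrow> 'c set \<Rightarrow> ('c \<Rightarrow> 'o)
    \<Rightarrow> (('a \<times> 'm \<times> (nat \<Rightarrow> 'b)) set \<times> 'm \<times> (nat \<Rightarrow> 'c)) set
    \<Rightarrow> ('a \<times> 'm \<times> (nat \<Rightarrow> ('b \<times> 'm \<times> (nat \<Rightarrow> 'c)) set)) set" where
  "smash_assoc C X dX rX Y dY rY Z dZ Q =
     (case (SOME q. q \<in> Q) of (Qxy, \<phi>, zs) \<Rightarrow>
        smash_q C X dX rX (smash C Y dY rY Z dZ) (smash_deg C)
          (tmap C id (smash_q C Y dY rY Z dZ) (assoc C ((SOME w. w \<in> Qxy), \<phi>, zs))))"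

end

theory Submission
  imports Defs
begin

lemma strict_sorted_card_less:
  fixes xs :: "nat list"
  assumes "sorted_wrt (<) xs" "k < length xs"
  shows "{x \<in> set xs. x < xs ! k} = set (take k xs)"
proof -
  have "x \<in> set (take k xs) \<longleftrightarrow> x \<in> set xs \<and> x < xs ! k" for x
  proof
    assume "x \<in> set (take k xs)"
    then obtain i where "i < k" "x = xs ! i" using assms(2)
      by (auto simp: in_set_conv_nth)
    then show "x \<in> set xs \<and> x < xs ! k" using assms
      by (metis less_trans nth_mem sorted_wrt_nth_less)
  next
    assume a: "x \<in> set xs \<and> x < xs ! k"
    then obtain i where i: "i < length xs" "x = xs ! i" by (auto simp: in_set_conv_nth)
    have "i < k"
    proof (rule ccontr)
      assume "\<not> i < k"
      then have "k < i \<or> k = i" by auto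
      then show False
      proof
        assume "k < i"
        then have "xs ! k < xs ! i" using assms(1) i(1) by (simp add: sorted_wrt_nth_less)
        then show False using a i by (meson less_asym)
      next
        assume "k = i" then show False using a i by simp
      qed
    qed
    then show "x \<in> set (take k xs)" using i assms(2)
      by (metis in_set_conv_nth length_take min.absorb4 nth_take order.strict_trans)
  qed
  then show ?thesis by blast
qed

lemma enum_props:
  assumes "k < card {j. j < m \<and> f j = i}"
  shows "sk_enum f m i k < m" "f (sk_enum f m i k) = i"
    "sk_rank f i (sk_enum f m i k) = k"
proof -
  let ?F = "{j. j < m \<and> f j = i}"
  let ?xs = "sorted_list_of_set ?F"
  have fin: "finite ?F" by simp
  have len: "length ?xs = card ?F" by simp
  have ss: "sorted_wrt (<) ?xs" using fin by (simp add: strict_sorted_list_of_set)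
  have dist: "distinct ?xs" by simp
  have mem: "?xs ! k \<in> ?F" using assms len fin
    by (metis nth_mem set_sorted_list_of_set)
  then show "sk_enum f m i k < m" "f (sk_enum f m i k) = i"
    by (auto simp: sk_enum_def)
  have "{j'. j' < ?xs ! k \<and> f j' = i} = {x \<in> set ?xs. x < ?xs ! k}"
    using mem fin by auto
  also have "\<dots> = set (take k ?xs)"
    using strict_sorted_card_less[OF ss] assms len by simp
  finally have eq: "{j'. j' < ?xs ! k \<and> f j' = i} = set (take k ?xs)" .
  have "card (set (take k ?xs)) = k"
    using assms len dist distinct_card[of "take k ?xs"] by simp
  then show "sk_rank f i (sk_enum f m i k) = k"
    unfolding sk_rank_def sk_enum_def eq .
qed

lemma rank_props:
  assumes "j < m" "f j = i"
  shows "sk_rank f i j < card {j. j < m \<and> f j = i}"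
    "sk_enum f m i (sk_rank f i j) = j"
proof -
  let ?F = "{j. j < m \<and> f j = i}"
  let ?xs = "sorted_list_of_set ?F"
  have fin: "finite ?F" by simp
  have "j \<in> ?F" using assms by simp
  then have "j \<in> set ?xs" using fin by (simp only: set_sorted_list_of_set)
  then have "\<exists>k<length ?xs. ?xs ! k = j" by (simp only: in_set_conv_nth)
  then obtain k where k: "k < length ?xs" "?xs ! k = j" by blast
  have len: "length ?xs = card ?F" by (rule length_sorted_list_of_set)
  have kc: "k < card ?F" using k(1) len by simp
  have e: "sk_enum f m i k = j" unfolding sk_enum_def using k(2) .
  have r: "sk_rank f i j = k" using enum_props(3)[OF kc] e by simp
  show "sk_rank f i j < card ?F" using r kc by simp
  show "sk_enum f m i (sk_rank f i j) = j" using r e by simp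
qed

lemma enum_unique0:
  assumes "card {j. j < m \<and> f j = i} = 1" "j < m" "f j = i"
  shows "sk_enum f m i 0 = j"
proof -
  have "sk_rank f i j < 1" using rank_props(1)[of j m f i] assms by simp
  then have "sk_rank f i j = 0" by simp
  then show ?thesis using rank_props(2)[of j m f i] assms by simp
qed

lemma sk_enum_cong: "{j. j < m \<and> f j = i} = {j. j < m' \<and> g j = i'} \<Longrightarrow> sk_enum f m i k = sk_enum g m' i' k"
  unfolding sk_enum_def by simp

locale opc =
  fixes C :: "('o, 'm) opcat"
  assumes oc: "operadic_category C"
begin

abbreviation nt where "nt f \<equiv> crd C (tgt C f)"
abbreviation ns where "ns f \<equiv> crd C (src C f)"
abbreviation en where "en f i k \<equiv> sk_enum (crdm C f) (crd C (src C f)) i k"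
abbreviation rk where "rk f i j \<equiv> sk_rank (crdm C f) i j"
abbreviation ft where "ft f \<equiv> fibrewise_trivial C f"
abbreviation triv where "triv u \<equiv> trivial_ob C u"

lemma isc: "is_category C" and cf: "card_functor C" and ff: "fibre_functors C"
  and cc: "card_compat C" and idtriv: "\<forall>c\<in>ob C. \<forall>i<crd C c. trivial_ob C (fib C (ide C c) i)"
  and ds: "double_slice C"
  using oc unfolding operadic_category_def by auto

lemma src_ob: "f \<in> mor C \<Longrightarrow> src C f \<in> ob C"
  using isc unfolding is_category_def by auto
lemma tgt_ob: "f \<in> mor C \<Longrightarrow> tgt C f \<in> ob C"
  using isc unfolding is_category_def by auto
lemma ide_mor: "c \<in> ob C \<Longrightarrow> ide C c \<in> mor C"
  and ide_src: "c \<in> ob C \<Longrightarrow> src C (ide C c) = c"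
  and ide_tgt: "c \<in> ob C \<Longrightarrow> tgt C (ide C c) = c"
  using isc unfolding is_category_def hom_def by auto
lemma cmp_mor: "f \<in> mor C \<Longrightarrow> g \<in> mor C \<Longrightarrow> tgt C f = src C g \<Longrightarrow> cmp C g f \<in> mor C"
  and cmp_src: "f \<in> mor C \<Longrightarrow> g \<in> mor C \<Longrightarrow> tgt C f = src C g \<Longrightarrow> src C (cmp C g f) = src C f"
  and cmp_tgt: "f \<in> mor C \<Longrightarrow> g \<in> mor C \<Longrightarrow> tgt C f = src C g \<Longrightarrow> tgt C (cmp C g f) = tgt C g"
  using isc unfolding is_category_def hom_def by auto
lemma cmp_ide_r: "f \<in> mor C \<Longrightarrow> cmp C f (ide C (src C f)) = f"
  and cmp_ide_l: "f \<in> mor C \<Longrightarrow> cmp C (ide C (tgt C f)) f = f"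
  using isc unfolding is_category_def by auto
lemma cmp_assoc: "f \<in> mor C \<Longrightarrow> g \<in> mor C \<Longrightarrow> h \<in> mor C \<Longrightarrow> tgt C f = src C g \<Longrightarrow>
    tgt C g = src C h \<Longrightarrow> cmp C h (cmp C g f) = cmp C (cmp C h g) f"
  using isc unfolding is_category_def by auto

lemma crdm_lt: "f \<in> mor C \<Longrightarrow> j < ns f \<Longrightarrow> crdm C f j < nt f"
  using cf unfolding card_functor_def by auto
lemma crdm_ide: "c \<in> ob C \<Longrightarrow> j < crd C c \<Longrightarrow> crdm C (ide C c) j = j"
  using cf unfolding card_functor_def by auto
lemma crdm_cmp: "f \<in> mor C \<Longrightarrow> g \<in> mor C \<Longrightarrow> tgt C f = src C g \<Longrightarrow> j < ns f \<Longrightarrow>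
    crdm C (cmp C g f) j = crdm C g (crdm C f j)"
  using cf unfolding card_functor_def by auto

lemma fib_ob: "\<psi> \<in> mor C \<Longrightarrow> i < nt \<psi> \<Longrightarrow> fib C \<psi> i \<in> ob C"
  using ff unfolding fibre_functors_def by auto
lemma fibm_mor: "\<psi> \<in> mor C \<Longrightarrow> \<phi> \<in> mor C \<Longrightarrow> tgt C \<phi> = src C \<psi> \<Longrightarrow> i < nt \<psi> \<Longrightarrow>
    fibm C \<psi> \<phi> i \<in> mor C"
  and fibm_src: "\<psi> \<in> mor C \<Longrightarrow> \<phi> \<in> mor C \<Longrightarrow> tgt C \<phi> = src C \<psi> \<Longrightarrow> i < nt \<psi> \<Longrightarrow>
    src C (fibm C \<psi> \<phi> i) = fib C (cmp C \<psi> \<phi>) i"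
  and fibm_tgt: "\<psi> \<in> mor C \<Longrightarrow> \<phi> \<in> mor C \<Longrightarrow> tgt C \<phi> = src C \<psi> \<Longrightarrow> i < nt \<psi> \<Longrightarrow>
    tgt C (fibm C \<psi> \<phi> i) = fib C \<psi> i"
  using ff unfolding fibre_functors_def hom_def by auto
lemma fibm_ide: "\<psi> \<in> mor C \<Longrightarrow> i < nt \<psi> \<Longrightarrow> fibm C \<psi> (ide C (src C \<psi>)) i = ide C (fib C \<psi> i)"
  using ff unfolding fibre_functors_def by auto
lemma fibm_cmp: "\<psi> \<in> mor C \<Longrightarrow> \<phi> \<in> mor C \<Longrightarrow> \<chi> \<in> mor C \<Longrightarrow> tgt C \<chi> = src C \<phi> \<Longrightarrow>
    tgt C \<phi> = src C \<psi> \<Longrightarrow> i < nt \<psi> \<Longrightarrow>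
    fibm C \<psi> (cmp C \<phi> \<chi>) i = cmp C (fibm C \<psi> \<phi> i) (fibm C (cmp C \<psi> \<phi>) \<chi> i)"
  using ff unfolding fibre_functors_def by auto

lemma crd_fib: "\<psi> \<in> mor C \<Longrightarrow> i < nt \<psi> \<Longrightarrow>
    crd C (fib C \<psi> i) = card {j. j < ns \<psi> \<and> crdm C \<psi> j = i}"
  using cc unfolding card_compat_def by auto
lemma crdm_fibm: "\<psi> \<in> mor C \<Longrightarrow> \<phi> \<in> mor C \<Longrightarrow> tgt C \<phi> = src C \<psi> \<Longrightarrow> i < nt \<psi> \<Longrightarrow>
    k < crd C (fib C (cmp C \<psi> \<phi>) i) \<Longrightarrow>
    crdm C (fibm C \<psi> \<phi> i) k = rk \<psi> i (crdm C \<phi> (en (cmp C \<psi> \<phi>) i k))"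
proof -
  assume a: "\<psi> \<in> mor C" "\<phi> \<in> mor C" "tgt C \<phi> = src C \<psi>" "i < nt \<psi>"
    "k < crd C (fib C (cmp C \<psi> \<phi>) i)"
  have "src C (cmp C \<psi> \<phi>) = src C \<phi>" using cmp_src a by blast
  then show ?thesis using cc a unfolding card_compat_def by auto
qed

lemma ds1_raw: "\<psi> \<in> mor C \<Longrightarrow> \<phi> \<in> mor C \<Longrightarrow> tgt C \<phi> = src C \<psi> \<Longrightarrow> j < ns \<psi> \<Longrightarrow>
    fib C \<phi> j = fib C (fibm C \<psi> \<phi> (crdm C \<psi> j)) (rk \<psi> (crdm C \<psi> j) j)"
  using ds unfolding double_slice_def by auto
lemma ds2_raw: "\<psi> \<in> mor C \<Longrightarrow> \<phi> \<in> mor C \<Longrightarrow> \<chi> \<in> mor C \<Longrightarrow> tgt C \<chi> = src C \<phi> \<Longrightarrow>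
    tgt C \<phi> = src C \<psi> \<Longrightarrow> j < ns \<psi> \<Longrightarrow>
    fibm C \<phi> \<chi> j = fibm C (fibm C \<psi> \<phi> (crdm C \<psi> j)) (fibm C (cmp C \<psi> \<phi>) \<chi> (crdm C \<psi> j))
                 (rk \<psi> (crdm C \<psi> j) j)"
  using ds unfolding double_slice_def by auto

lemma en_props:
  assumes "\<psi> \<in> mor C" "i < nt \<psi>" "k < crd C (fib C \<psi> i)"
  shows "en \<psi> i k < ns \<psi>" "crdm C \<psi> (en \<psi> i k) = i" "rk \<psi> i (en \<psi> i k) = k"
proof -
  have k': "k < card {j. j < ns \<psi> \<and> crdm C \<psi> j = i}"
    using assms(3) unfolding crd_fib[OF assms(1,2)] .
  show "en \<psi> i k < ns \<psi>" "crdm C \<psi> (en \<psi> i k) = i" "rk \<psi> i (en \<psi> i k) = k"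
    using enum_props[OF k'] by auto
qed

lemma rk_props:
  assumes "\<psi> \<in> mor C" "j < ns \<psi>"
  shows "rk \<psi> (crdm C \<psi> j) j < crd C (fib C \<psi> (crdm C \<psi> j))"
    "en \<psi> (crdm C \<psi> j) (rk \<psi> (crdm C \<psi> j) j) = j"
proof -
  have lt: "crdm C \<psi> j < nt \<psi>" using crdm_lt[OF assms] .
  show "rk \<psi> (crdm C \<psi> j) j < crd C (fib C \<psi> (crdm C \<psi> j))"
    unfolding crd_fib[OF assms(1) lt] using rank_props(1)[of j "ns \<psi>" "crdm C \<psi>" "crdm C \<psi> j"] assms(2) by blast
  show "en \<psi> (crdm C \<psi> j) (rk \<psi> (crdm C \<psi> j) j) = j"
    using rank_props(2)[of j "ns \<psi>" "crdm C \<psi>" "crdm C \<psi> j"] assms(2) by blast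
qed

lemma ds1: assumes "\<psi> \<in> mor C" "\<phi> \<in> mor C" "tgt C \<phi> = src C \<psi>" "i < nt \<psi>"
    "k < crd C (fib C \<psi> i)"
  shows "fib C \<phi> (en \<psi> i k) = fib C (fibm C \<psi> \<phi> i) k"
  using ds1_raw[OF assms(1-3) en_props(1)[OF assms(1,4,5)]] en_props[OF assms(1,4,5)] by simp

lemma ds2: assumes "\<psi> \<in> mor C" "\<phi> \<in> mor C" "\<chi> \<in> mor C" "tgt C \<chi> = src C \<phi>"
    "tgt C \<phi> = src C \<psi>" "i < nt \<psi>" "k < crd C (fib C \<psi> i)"
  shows "fibm C \<phi> \<chi> (en \<psi> i k) = fibm C (fibm C \<psi> \<phi> i) (fibm C (cmp C \<psi> \<phi>) \<chi> i) k"
  using ds2_raw[OF assms(1-5) en_props(1)[OF assms(1,6,7)]] en_props[OF assms(1,6,7)] by simp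

lemma triv_ob: "triv u \<Longrightarrow> u \<in> ob C" and triv_crd: "triv u \<Longrightarrow> crd C u = 1"
  and triv_fib: "triv u \<Longrightarrow> \<psi> \<in> mor C \<Longrightarrow> tgt C \<psi> = u \<Longrightarrow> fib C \<psi> 0 = src C \<psi>"
  and triv_fibm: "triv u \<Longrightarrow> \<psi> \<in> mor C \<Longrightarrow> \<phi> \<in> mor C \<Longrightarrow> tgt C \<psi> = u \<Longrightarrow>
     tgt C \<phi> = src C \<psi> \<Longrightarrow> fibm C \<psi> \<phi> 0 = \<phi>"
  unfolding trivial_ob_def by auto

lemma ft_def': "ft f \<longleftrightarrow> (\<forall>k<nt f. triv (fib C f k))"
  unfolding fibrewise_trivial_def ..

lemma TT:
  assumes \<psi>: "\<psi> \<in> mor C" and \<phi>1: "\<phi>1 \<in> mor C" and t: "tgt C \<phi>1 = src C \<psi>"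
    and i: "i < nt \<psi>" and tr: "triv (fib C \<psi> i)"
  shows "en \<psi> i 0 < ns \<psi>" "crdm C \<psi> (en \<psi> i 0) = i"
    "\<And>j. j < ns \<psi> \<Longrightarrow> crdm C \<psi> j = i \<Longrightarrow> j = en \<psi> i 0"
    "fib C \<phi>1 (en \<psi> i 0) = fib C (cmp C \<psi> \<phi>1) i"
    "\<And>\<chi>. \<chi> \<in> mor C \<Longrightarrow> tgt C \<chi> = src C \<phi>1 \<Longrightarrow>
        fibm C \<phi>1 \<chi> (en \<psi> i 0) = fibm C (cmp C \<psi> \<phi>1) \<chi> i"
    "\<And>k. en \<phi>1 (en \<psi> i 0) k = en (cmp C \<psi> \<phi>1) i k"
    "\<And>j. j < ns \<phi>1 \<Longrightarrow> rk \<phi>1 (en \<psi> i 0) j = rk (cmp C \<psi> \<phi>1) i j"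
    "\<And>j. j < ns \<phi>1 \<Longrightarrow> crdm C (cmp C \<psi> \<phi>1) j = i \<longleftrightarrow> crdm C \<phi>1 j = en \<psi> i 0"
proof -
  have c1: "crd C (fib C \<psi> i) = 1" using tr triv_crd by blast
  have k0: "0 < crd C (fib C \<psi> i)" using c1 by simp
  show e1: "en \<psi> i 0 < ns \<psi>" "crdm C \<psi> (en \<psi> i 0) = i" using en_props[OF \<psi> i k0] by auto
  have card1: "card {j. j < ns \<psi> \<and> crdm C \<psi> j = i} = 1" using c1 crd_fib[OF \<psi> i] by simp
  show uq: "\<And>j. j < ns \<psi> \<Longrightarrow> crdm C \<psi> j = i \<Longrightarrow> j = en \<psi> i 0"
  proof -
    fix j assume "j < ns \<psi>" "crdm C \<psi> j = i"
    from enum_unique0[OF card1 this] show "j = en \<psi> i 0" by simp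
  qed
  let ?e = "en \<psi> i 0"
  have r0: "rk \<psi> i ?e = 0" using en_props(3)[OF \<psi> i k0] .
  have fm: "fibm C \<psi> \<phi>1 i \<in> mor C" "tgt C (fibm C \<psi> \<phi>1 i) = fib C \<psi> i"
    "src C (fibm C \<psi> \<phi>1 i) = fib C (cmp C \<psi> \<phi>1) i"
    using fibm_mor[OF \<psi> \<phi>1 t i] fibm_tgt[OF \<psi> \<phi>1 t i] fibm_src[OF \<psi> \<phi>1 t i] by auto
  show "fib C \<phi>1 ?e = fib C (cmp C \<psi> \<phi>1) i"
    using ds1[OF \<psi> \<phi>1 t i k0] triv_fib[OF tr fm(1,2)] fm(3) by simp
  show "\<And>\<chi>. \<chi> \<in> mor C \<Longrightarrow> tgt C \<chi> = src C \<phi>1 \<Longrightarrow>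
        fibm C \<phi>1 \<chi> ?e = fibm C (cmp C \<psi> \<phi>1) \<chi> i"
  proof -
    fix \<chi> assume \<chi>: "\<chi> \<in> mor C" "tgt C \<chi> = src C \<phi>1"
    have m2: "fibm C (cmp C \<psi> \<phi>1) \<chi> i \<in> mor C" "tgt C (fibm C (cmp C \<psi> \<phi>1) \<chi> i) = fib C (cmp C \<psi> \<phi>1) i"
      using fibm_mor[OF cmp_mor[OF \<phi>1 \<psi> t] \<chi>(1)] fibm_tgt[OF cmp_mor[OF \<phi>1 \<psi> t] \<chi>(1)]
        cmp_src[OF \<phi>1 \<psi> t] cmp_tgt[OF \<phi>1 \<psi> t] \<chi> i by auto
    show "fibm C \<phi>1 \<chi> ?e = fibm C (cmp C \<psi> \<phi>1) \<chi> i"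
      using ds2[OF \<psi> \<phi>1 \<chi>(1) \<chi>(2) t i k0] triv_fibm[OF tr fm(1) m2(1) fm(2)] m2(2) fm(3) by simp
  qed
  show eqv: "\<And>j. j < ns \<phi>1 \<Longrightarrow> crdm C (cmp C \<psi> \<phi>1) j = i \<longleftrightarrow> crdm C \<phi>1 j = ?e"
  proof -
    fix j assume j: "j < ns \<phi>1"
    have lt: "crdm C \<phi>1 j < ns \<psi>" using crdm_lt[OF \<phi>1 j] t by simp
    have "crdm C (cmp C \<psi> \<phi>1) j = crdm C \<psi> (crdm C \<phi>1 j)" using crdm_cmp[OF \<phi>1 \<psi> t j] .
    then show "crdm C (cmp C \<psi> \<phi>1) j = i \<longleftrightarrow> crdm C \<phi>1 j = ?e"
      using uq[OF lt] e1(2) by metis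
  qed
  have ns_eq: "ns (cmp C \<psi> \<phi>1) = ns \<phi>1" using cmp_src[OF \<phi>1 \<psi> t] by simp
  have sets: "{j. j < ns \<phi>1 \<and> crdm C \<phi>1 j = ?e} = {j. j < ns (cmp C \<psi> \<phi>1) \<and> crdm C (cmp C \<psi> \<phi>1) j = i}"
    using eqv ns_eq by auto
  show "\<And>k. en \<phi>1 ?e k = en (cmp C \<psi> \<phi>1) i k"
    by (rule sk_enum_cong[OF sets])
  show "\<And>j. j < ns \<phi>1 \<Longrightarrow> rk \<phi>1 ?e j = rk (cmp C \<psi> \<phi>1) i j"
  proof -
    fix j assume j: "j < ns \<phi>1"
    have "{j'. j' < j \<and> crdm C \<phi>1 j' = ?e} = {j'. j' < j \<and> crdm C (cmp C \<psi> \<phi>1) j' = i}"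
    proof (rule Collect_cong)
      fix j' show "(j' < j \<and> crdm C \<phi>1 j' = ?e) = (j' < j \<and> crdm C (cmp C \<psi> \<phi>1) j' = i)"
        using eqv[of j'] j by (metis order.strict_trans)
    qed
    then show "rk \<phi>1 ?e j = rk (cmp C \<psi> \<phi>1) i j" unfolding sk_rank_def by simp
  qed
qed

end

lemma E_refl: "(a, a) \<in> (R \<union> R\<inverse>)\<^sup>*" by simp
lemma E_sym: "(a, b) \<in> (R \<union> R\<inverse>)\<^sup>* \<Longrightarrow> (b, a) \<in> (R \<union> R\<inverse>)\<^sup>*"
  by (metis converse_Un converse_converse converse_iff rtrancl_converse sup_commute)
lemma E_trans: "(a, b) \<in> (R \<union> R\<inverse>)\<^sup>* \<Longrightarrow> (b, c) \<in> (R \<union> R\<inverse>)\<^sup>* \<Longrightarrow> (a, c) \<in> (R \<union> R\<inverse>)\<^sup>*"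
  by (rule rtrancl_trans)
lemma E_gen: "(a, b) \<in> R \<Longrightarrow> (a, b) \<in> (R \<union> R\<inverse>)\<^sup>*" by auto
lemma E_class_eq: "((R \<union> R\<inverse>)\<^sup>* `` {a} = (R \<union> R\<inverse>)\<^sup>* `` {b}) \<longleftrightarrow> (a, b) \<in> (R \<union> R\<inverse>)\<^sup>*"
proof
  assume h: "(R \<union> R\<inverse>)\<^sup>* `` {a} = (R \<union> R\<inverse>)\<^sup>* `` {b}"
  have "b \<in> (R \<union> R\<inverse>)\<^sup>* `` {b}" by simp
  then have "b \<in> (R \<union> R\<inverse>)\<^sup>* `` {a}" using h by simp
  then show "(a, b) \<in> (R \<union> R\<inverse>)\<^sup>*" by simp
next
  assume h: "(a, b) \<in> (R \<union> R\<inverse>)\<^sup>*"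
  show "(R \<union> R\<inverse>)\<^sup>* `` {a} = (R \<union> R\<inverse>)\<^sup>* `` {b}"
  proof (rule set_eqI)
    fix c show "c \<in> (R \<union> R\<inverse>)\<^sup>* `` {a} \<longleftrightarrow> c \<in> (R \<union> R\<inverse>)\<^sup>* `` {b}"
      using E_trans[OF h, of c] E_trans[OF E_sym[OF h], of c] by auto
  qed
qed
lemma E_rep: "(a, SOME v. v \<in> (R \<union> R\<inverse>)\<^sup>* `` {a}) \<in> (R \<union> R\<inverse>)\<^sup>*"
proof -
  have "a \<in> (R \<union> R\<inverse>)\<^sup>* `` {a}" by simp
  then have "(SOME v. v \<in> (R \<union> R\<inverse>)\<^sup>* `` {a}) \<in> (R \<union> R\<inverse>)\<^sup>* `` {a}" by (rule someI)
  then show ?thesis by simp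
qed
lemma E_inv:
  assumes "\<And>a b. (a, b) \<in> R \<Longrightarrow> P a \<longleftrightarrow> P b"
    and "\<And>a b. (a, b) \<in> R \<Longrightarrow> P a \<Longrightarrow> f a = f b"
    and "(a, b) \<in> (R \<union> R\<inverse>)\<^sup>*" and "P a"
  shows "P b \<and> f a = f b"
  using assms(3,4)
proof (induction rule: rtrancl_induct)
  case base then show ?case by simp
next
  case (step b c)
  then have "(b, c) \<in> R \<or> (c, b) \<in> R" by auto
  then show ?case using step assms(1,2) by metis
qed

context opc begin

lemma ft_ide: "c \<in> ob C \<Longrightarrow> ft (ide C c)"
  using idtriv ide_tgt unfolding ft_def' by simp

lemma FTU:
  assumes \<rho>: "\<rho> \<in> mor C" "ft \<rho>"
  shows "\<And>k. k < nt \<rho> \<Longrightarrow> en \<rho> k 0 < ns \<rho> \<and> crdm C \<rho> (en \<rho> k 0) = k"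
    "\<And>j. j < ns \<rho> \<Longrightarrow> en \<rho> (crdm C \<rho> j) 0 = j"
proof -
  fix k assume k: "k < nt \<rho>"
  have t: "triv (fib C \<rho> k)" using \<rho>(2) k unfolding ft_def' by simp
  have "0 < crd C (fib C \<rho> k)" using triv_crd[OF t] by simp
  then show "en \<rho> k 0 < ns \<rho> \<and> crdm C \<rho> (en \<rho> k 0) = k" using en_props[OF \<rho>(1) k] by simp
next
  fix j assume j: "j < ns \<rho>"
  let ?k = "crdm C \<rho> j"
  have k: "?k < nt \<rho>" using crdm_lt[OF \<rho>(1) j] .
  have t: "triv (fib C \<rho> ?k)" using \<rho>(2) k unfolding ft_def' by simp
  have r: "rk \<rho> ?k j < 1" using rk_props(1)[OF \<rho>(1) j] triv_crd[OF t] by simp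
  show "en \<rho> (crdm C \<rho> j) 0 = j" using rk_props(2)[OF \<rho>(1) j] r by simp
qed

lemma ft_cmp:
  assumes "\<rho> \<in> mor C" "\<sigma> \<in> mor C" "tgt C \<sigma> = src C \<rho>" "ft \<rho>" "ft \<sigma>"
  shows "ft (cmp C \<rho> \<sigma>)"
  unfolding ft_def'
proof (intro allI impI)
  fix l assume l: "l < nt (cmp C \<rho> \<sigma>)"
  have l': "l < nt \<rho>" using l cmp_tgt[OF assms(2,1,3)] by simp
  have t: "triv (fib C \<rho> l)" using assms(4) l' unfolding ft_def' by simp
  note T = TT[OF assms(1,2,3) l' t]
  have "en \<rho> l 0 < nt \<sigma>" using T(1) assms(3) by simp
  then have "triv (fib C \<sigma> (en \<rho> l 0))" using assms(5) unfolding ft_def' by simp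
  then show "triv (fib C (cmp C \<rho> \<sigma>) l)" using T(4) by simp
qed

lemma ft_cancel:
  assumes "\<sigma> \<in> mor C" "\<beta> \<in> mor C" "tgt C \<beta> = src C \<sigma>" "ft \<sigma>" "ft (cmp C \<sigma> \<beta>)"
  shows "ft \<beta>"
  unfolding ft_def'
proof (intro allI impI)
  fix k assume k: "k < nt \<beta>"
  have k': "k < ns \<sigma>" using k assms(3) by simp
  let ?l = "crdm C \<sigma> k"
  have l: "?l < nt \<sigma>" using crdm_lt[OF assms(1) k'] .
  have t: "triv (fib C \<sigma> ?l)" using assms(4) l unfolding ft_def' by simp
  note T = TT[OF assms(1,2,3) l t]
  have e: "en \<sigma> ?l 0 = k" using FTU(2)[OF assms(1,4) k'] .
  have "?l < nt (cmp C \<sigma> \<beta>)" using l cmp_tgt[OF assms(2,1,3)] by simp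
  then have "triv (fib C (cmp C \<sigma> \<beta>) ?l)" using assms(5) unfolding ft_def' by simp
  then show "triv (fib C \<beta> k)" using T(4) e by simp
qed

lemma ft_fibm:
  assumes "\<psi> \<in> mor C" "\<kappa> \<in> mor C" "tgt C \<kappa> = src C \<psi>" "ft \<kappa>" "i < nt \<psi>"
  shows "ft (fibm C \<psi> \<kappa> i)"
  unfolding ft_def'
proof (intro allI impI)
  fix k assume k: "k < nt (fibm C \<psi> \<kappa> i)"
  have k': "k < crd C (fib C \<psi> i)" using k fibm_tgt[OF assms(1,2,3,5)] by simp
  have "en \<psi> i k < nt \<kappa>" using en_props(1)[OF assms(1,5) k'] assms(3) by simp
  then have "triv (fib C \<kappa> (en \<psi> i k))" using assms(4) unfolding ft_def' by simp
  then show "triv (fib C (fibm C \<psi> \<kappa> i) k)" using ds1[OF assms(1,2,3,5) k'] by simp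
qed

lemma ft_from_fibm:
  assumes "\<psi> \<in> mor C" "\<kappa> \<in> mor C" "tgt C \<kappa> = src C \<psi>" "\<And>i. i < nt \<psi> \<Longrightarrow> ft (fibm C \<psi> \<kappa> i)"
  shows "ft \<kappa>"
  unfolding ft_def'
proof (intro allI impI)
  fix j assume j: "j < nt \<kappa>"
  have j': "j < ns \<psi>" using j assms(3) by simp
  let ?i = "crdm C \<psi> j"
  have i: "?i < nt \<psi>" using crdm_lt[OF assms(1) j'] .
  have r: "rk \<psi> ?i j < nt (fibm C \<psi> \<kappa> ?i)"
    using rk_props(1)[OF assms(1) j'] fibm_tgt[OF assms(1,2,3) i] by simp
  have "triv (fib C (fibm C \<psi> \<kappa> ?i) (rk \<psi> ?i j))" using assms(4)[OF i] r unfolding ft_def' by simp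
  then show "triv (fib C \<kappa> j)" using ds1_raw[OF assms(1,2,3) j'] by simp
qed

definition fibs :: "'m \<Rightarrow> nat \<Rightarrow> 'o" where
  "fibs f = (\<lambda>i. if i < nt f then fib C f i else undefined)"

definition ract :: "(('a \<times> 'm \<times> (nat \<Rightarrow> 'o)) \<Rightarrow> 'a) \<Rightarrow> 'a \<Rightarrow> 'm \<Rightarrow> 'a" where
  "ract r x f = r (x, f, fibs f)"

definition pull :: "'m \<Rightarrow> (nat \<Rightarrow> 'b) \<Rightarrow> nat \<Rightarrow> 'b" where
  "pull \<psi> ys = (\<lambda>i. if i < nt \<psi> then ys (en \<psi> i 0) else undefined)"

definition ysok :: "'b set \<Rightarrow> ('b \<Rightarrow> 'o) \<Rightarrow> 'm \<Rightarrow> (nat \<Rightarrow> 'b) \<Rightarrow> bool" where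
  "ysok Y dY \<phi> ys \<longleftrightarrow> (\<forall>i<nt \<phi>. ys i \<in> Y \<and> dY (ys i) = fib C \<phi> i) \<and> (\<forall>i. nt \<phi> \<le> i \<longrightarrow> ys i = undefined)"

lemma tens_iff: "(x, \<phi>, ys) \<in> tens C X dX Y dY \<longleftrightarrow> \<phi> \<in> mor C \<and> x \<in> X \<and> dX x = tgt C \<phi> \<and> ysok Y dY \<phi> ys"
  unfolding tens_def ysok_def by auto

lemma tens_cases: "w \<in> tens C X dX Y dY \<Longrightarrow> (\<And>x \<phi> ys. w = (x, \<phi>, ys) \<Longrightarrow> \<phi> \<in> mor C \<Longrightarrow> x \<in> X \<Longrightarrow>
   dX x = tgt C \<phi> \<Longrightarrow> ysok Y dY \<phi> ys \<Longrightarrow> P) \<Longrightarrow> P"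
  by (cases w) (auto simp: tens_iff)

lemma ysok_U: "ysok (unitU C) id f us \<longleftrightarrow> ft f \<and> us = fibs f"
proof
  assume h: "ysok (unitU C) id f us"
  have "ft f" unfolding ft_def' using h unfolding ysok_def unitU_def by auto
  moreover have "us = fibs f"
  proof
    fix i show "us i = fibs f i" using h unfolding ysok_def fibs_def by (cases "i < nt f") auto
  qed
  ultimately show "ft f \<and> us = fibs f" by simp
next
  assume "ft f \<and> us = fibs f"
  then show "ysok (unitU C) id f us" unfolding ysok_def unitU_def fibs_def ft_def' by auto
qed

lemma tensU_iff: "(x, f, us) \<in> tens C X dX (unitU C) id \<longleftrightarrow>
    f \<in> mor C \<and> x \<in> X \<and> dX x = tgt C f \<and> ft f \<and> us = fibs f"
  unfolding tens_iff ysok_U by simp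

lemma tmap_simp: "tmap C f g (x, \<phi>, ys) = (f x, \<phi>, \<lambda>i. if i < nt \<phi> then g (ys i) else undefined)"
  unfolding tmap_def by simp

lemma assoc_simp: "assoc C ((x, \<psi>, ys), \<phi>, zs) = (x, cmp C \<psi> \<phi>,
       \<lambda>i. if i < nt \<psi> then
              (ys i, fibm C \<psi> \<phi> i,
               \<lambda>k. if k < crd C (fib C \<psi> i) then zs (en \<psi> i k) else undefined)
            else undefined)"
  unfolding assoc_def by simp

lemma tdeg_simp: "tdeg C (x, \<phi>, ys) = src C \<phi>" unfolding tdeg_def by simp

lemma ysok_undef: "ysok Y dY \<phi> ys \<Longrightarrow> (\<lambda>i. if i < nt \<phi> then ys i else undefined) = ys"
  unfolding ysok_def by (intro ext) auto

definition actok :: "'a set \<Rightarrow> ('a \<Rightarrow> 'o) \<Rightarrow> (('a \<times> 'm \<times> (nat \<Rightarrow> 'o)) \<Rightarrow> 'a) \<Rightarrow> bool" where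
  "actok X dX r \<longleftrightarrow> (\<forall>x f. x \<in> X \<and> f \<in> mor C \<and> dX x = tgt C f \<and> ft f \<longrightarrow>
      ract r x f \<in> X \<and> dX (ract r x f) = src C f)"

lemma actok_rmod: "rmodule C X dX r \<Longrightarrow> actok X dX r"
  unfolding actok_def rmodule_def ract_def
proof (intro allI impI, elim conjE)
  fix x f assume h: "\<forall>w\<in>tens C X dX (unitU C) id. r w \<in> X \<and> dX (r w) = tdeg C w"
    "x \<in> X" "f \<in> mor C" "dX x = tgt C f" "ft f"
  have "(x, f, fibs f) \<in> tens C X dX (unitU C) id" by (rule tensU_iff[THEN iffD2]) (use h in simp)
  then show "r (x, f, fibs f) \<in> X \<and> dX (r (x, f, fibs f)) = src C f" using h(1) tdeg_simp by fastforce
qed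

lemma actokD: "actok X dX r \<Longrightarrow> x \<in> X \<Longrightarrow> f \<in> mor C \<Longrightarrow> dX x = tgt C f \<Longrightarrow> ft f \<Longrightarrow>
      ract r x f \<in> X \<and> dX (ract r x f) = src C f"
  unfolding actok_def by blast

lemma rmod_ob: "rmodule C X dX r \<Longrightarrow> x \<in> X \<Longrightarrow> dX x \<in> ob C"
  unfolding rmodule_def by blast

lemma fibs_ide: "c \<in> ob C \<Longrightarrow> fibs (ide C c) = (\<lambda>i. if i < crd C c then fib C (ide C c) i else undefined)"
  unfolding fibs_def using ide_tgt by simp

lemma M3: assumes "rmodule C X dX r" "x \<in> X" shows "ract r x (ide C (dX x)) = x"
proof -
  have f: "fibs (ide C (dX x)) = (\<lambda>i. if i < crd C (dX x) then fib C (ide C (dX x)) i else undefined)"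
    using fibs_ide[OF rmod_ob[OF assms]] .
  have "r (runit C dX x) = x" using assms unfolding rmodule_def by blast
  then show ?thesis unfolding ract_def runit_def f .
qed

lemma M2:
  assumes m: "rmodule C X dX r" and x: "x \<in> X" "dX x = tgt C \<sigma>"
    and \<sigma>: "\<sigma> \<in> mor C" "ft \<sigma>" and \<kappa>: "\<kappa> \<in> mor C" "tgt C \<kappa> = src C \<sigma>" "ft \<kappa>"
  shows "ract r (ract r x \<sigma>) \<kappa> = ract r x (cmp C \<sigma> \<kappa>)"
proof -
  let ?w = "((x, \<sigma>, fibs \<sigma>), \<kappa>, fibs \<kappa>)"
  have w1: "(x, \<sigma>, fibs \<sigma>) \<in> tens C X dX (unitU C) id" by (rule tensU_iff[THEN iffD2]) (use x \<sigma> in simp)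
  have w: "?w \<in> tens C (tens C X dX (unitU C) id) (tdeg C) (unitU C) id"
    by (rule tensU_iff[THEN iffD2]) (use w1 \<kappa> tdeg_simp in simp)
  have ax: "r (tmap C r id ?w) = r (tmap C id lunit (assoc C ?w))"
    using m w unfolding rmodule_def by blast
  have ysk: "ysok (unitU C) id \<kappa> (fibs \<kappa>)" using ysok_U \<kappa> by simp
  have fe: "(\<lambda>i. if i < nt \<kappa> then id (fibs \<kappa> i) else undefined) = fibs \<kappa>"
    by (rule ext) (simp add: fibs_def)
  have l: "tmap C r id ?w = (ract r x \<sigma>, \<kappa>, fibs \<kappa>)"
    unfolding tmap_simp ract_def fe ..
  have nt_eq: "nt (cmp C \<sigma> \<kappa>) = nt \<sigma>" using cmp_tgt[OF \<kappa>(1) \<sigma>(1) \<kappa>(2)] by simp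
  have inner: "(\<lambda>i. if i < nt (cmp C \<sigma> \<kappa>) then lunit (if i < nt \<sigma> then (fibs \<sigma> i, fibm C \<sigma> \<kappa> i,
        \<lambda>k. if k < crd C (fib C \<sigma> i) then fibs \<kappa> (en \<sigma> i k) else undefined) else undefined) else undefined)
      = fibs (cmp C \<sigma> \<kappa>)"
  proof
    fix i show "(if i < nt (cmp C \<sigma> \<kappa>) then lunit (if i < nt \<sigma> then (fibs \<sigma> i, fibm C \<sigma> \<kappa> i,
        \<lambda>k. if k < crd C (fib C \<sigma> i) then fibs \<kappa> (en \<sigma> i k) else undefined) else undefined) else undefined)
      = fibs (cmp C \<sigma> \<kappa>) i"
    proof (cases "i < nt \<sigma>")
      case True
      have t: "triv (fib C \<sigma> i)" using \<sigma>(2) True unfolding ft_def' by simp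
      note T = TT[OF \<sigma>(1) \<kappa>(1,2) True t]
      have c1: "0 < crd C (fib C \<sigma> i)" using triv_crd[OF t] by simp
      have e: "en \<sigma> i 0 < nt \<kappa>" using T(1) \<kappa>(2) by simp
      show ?thesis using True c1 e T(4) nt_eq unfolding lunit_def fibs_def by simp
    next
      case False then show ?thesis using nt_eq unfolding fibs_def by simp
    qed
  qed
  have rr: "tmap C id lunit (assoc C ?w) = (x, cmp C \<sigma> \<kappa>, fibs (cmp C \<sigma> \<kappa>))"
    unfolding assoc_simp tmap_simp using inner by simp
  show ?thesis using ax l rr unfolding ract_def by simp
qed

end

context opc begin

lemma gen_l: "ysok Y dY \<phi> ys \<Longrightarrow> tmap C rX id ((x, \<psi>, fibs \<psi>), \<phi>, ys) = (ract rX x \<psi>, \<phi>, ys)"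
proof -
  assume h: "ysok Y dY \<phi> ys"
  have fe: "(\<lambda>i. if i < nt \<phi> then id (ys i) else undefined) = ys"
    using h unfolding ysok_def by (intro ext) auto
  show ?thesis unfolding tmap_simp ract_def fe ..
qed

lemma gen_r:
  assumes "\<psi> \<in> mor C" "\<phi> \<in> mor C" "tgt C \<phi> = src C \<psi>" "ft \<psi>"
  shows "tmap C id lunit (assoc C ((x, \<psi>, us), \<phi>, ys)) = (x, cmp C \<psi> \<phi>, pull \<psi> ys)"
proof -
  have nt_eq: "nt (cmp C \<psi> \<phi>) = nt \<psi>" using cmp_tgt[OF assms(2,1,3)] by simp
  have fe: "(\<lambda>i. if i < nt (cmp C \<psi> \<phi>) then lunit (if i < nt \<psi> then (us i, fibm C \<psi> \<phi> i,
        \<lambda>k. if k < crd C (fib C \<psi> i) then ys (en \<psi> i k) else undefined) else undefined) else undefined)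
      = pull \<psi> ys"
  proof
    fix i show "(if i < nt (cmp C \<psi> \<phi>) then lunit (if i < nt \<psi> then (us i, fibm C \<psi> \<phi> i,
        \<lambda>k. if k < crd C (fib C \<psi> i) then ys (en \<psi> i k) else undefined) else undefined) else undefined)
      = pull \<psi> ys i"
    proof (cases "i < nt \<psi>")
      case True
      have t: "triv (fib C \<psi> i)" using assms(4) True unfolding ft_def' by simp
      have c1: "0 < crd C (fib C \<psi> i)" using triv_crd[OF t] by simp
      show ?thesis using True c1 nt_eq unfolding lunit_def pull_def by simp
    next
      case False then show ?thesis using nt_eq unfolding pull_def by simp
    qed
  qed
  show ?thesis unfolding assoc_simp tmap_simp fe by simp
qed

lemma gen_iff: "(a, b) \<in> smash_gen C X dX rX Y dY \<longleftrightarrow>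
   (\<exists>x \<psi> \<phi> ys. x \<in> X \<and> \<psi> \<in> mor C \<and> dX x = tgt C \<psi> \<and> ft \<psi> \<and> \<phi> \<in> mor C \<and> tgt C \<phi> = src C \<psi> \<and>
      ysok Y dY \<phi> ys \<and> a = (ract rX x \<psi>, \<phi>, ys) \<and> b = (x, cmp C \<psi> \<phi>, pull \<psi> ys))"
proof
  assume "(a, b) \<in> smash_gen C X dX rX Y dY"
  then obtain w where w: "w \<in> tens C (tens C X dX (unitU C) id) (tdeg C) Y dY"
    "a = tmap C rX id w" "b = tmap C id lunit (assoc C w)"
    unfolding smash_gen_def by blast
  obtain w1 \<phi> ys where w1: "w = (w1, \<phi>, ys)" "\<phi> \<in> mor C" "w1 \<in> tens C X dX (unitU C) id"
    "tdeg C w1 = tgt C \<phi>" "ysok Y dY \<phi> ys"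
    using w(1) by (rule tens_cases) blast
  obtain x \<psi> us where w2: "w1 = (x, \<psi>, us)" by (cases w1) blast
  have h: "\<psi> \<in> mor C" "x \<in> X" "dX x = tgt C \<psi>" "ft \<psi>" "us = fibs \<psi>"
    using w1(3) unfolding w2 tensU_iff by auto
  have t: "tgt C \<phi> = src C \<psi>" using w1(4) unfolding w2 tdeg_simp by simp
  have "a = (ract rX x \<psi>, \<phi>, ys)" using w(2) gen_l[OF w1(5)] unfolding w1(1) w2 h(5) by simp
  moreover have "b = (x, cmp C \<psi> \<phi>, pull \<psi> ys)" using w(3) gen_r[OF h(1) w1(2) t h(4)] unfolding w1(1) w2 by simp
  ultimately show "\<exists>x \<psi> \<phi> ys. x \<in> X \<and> \<psi> \<in> mor C \<and> dX x = tgt C \<psi> \<and> ft \<psi> \<and> \<phi> \<in> mor C \<and> tgt C \<phi> = src C \<psi> \<and>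
      ysok Y dY \<phi> ys \<and> a = (ract rX x \<psi>, \<phi>, ys) \<and> b = (x, cmp C \<psi> \<phi>, pull \<psi> ys)"
    using h w1(2,5) t by blast
next
  assume "\<exists>x \<psi> \<phi> ys. x \<in> X \<and> \<psi> \<in> mor C \<and> dX x = tgt C \<psi> \<and> ft \<psi> \<and> \<phi> \<in> mor C \<and> tgt C \<phi> = src C \<psi> \<and>
      ysok Y dY \<phi> ys \<and> a = (ract rX x \<psi>, \<phi>, ys) \<and> b = (x, cmp C \<psi> \<phi>, pull \<psi> ys)"
  then obtain x \<psi> \<phi> ys where h: "x \<in> X" "\<psi> \<in> mor C" "dX x = tgt C \<psi>" "ft \<psi>" "\<phi> \<in> mor C"
    "tgt C \<phi> = src C \<psi>" "ysok Y dY \<phi> ys" "a = (ract rX x \<psi>, \<phi>, ys)" "b = (x, cmp C \<psi> \<phi>, pull \<psi> ys)"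
    by blast
  let ?w = "((x, \<psi>, fibs \<psi>), \<phi>, ys)"
  have w1: "(x, \<psi>, fibs \<psi>) \<in> tens C X dX (unitU C) id"
    by (rule tensU_iff[THEN iffD2]) (use h in simp)
  have w: "?w \<in> tens C (tens C X dX (unitU C) id) (tdeg C) Y dY"
    by (rule tens_iff[THEN iffD2]) (use h w1 tdeg_simp in simp)
  have "a = tmap C rX id ?w" using gen_l[OF h(7), of rX x \<psi>] h(8) by simp
  moreover have "b = tmap C id lunit (assoc C ?w)" using gen_r[OF h(2,5,6,4), of x "fibs \<psi>" ys] h(9) by simp
  ultimately show "(a, b) \<in> smash_gen C X dX rX Y dY" unfolding smash_gen_def using w by blast
qed

lemma pull_ok:
  assumes "\<psi> \<in> mor C" "\<phi> \<in> mor C" "tgt C \<phi> = src C \<psi>" "ft \<psi>" "ysok Y dY \<phi> ys"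
  shows "ysok Y dY (cmp C \<psi> \<phi>) (pull \<psi> ys)"
  unfolding ysok_def
proof (intro conjI allI impI)
  have nt_eq: "nt (cmp C \<psi> \<phi>) = nt \<psi>" using cmp_tgt[OF assms(2,1,3)] by simp
  fix i
  { assume "i < nt (cmp C \<psi> \<phi>)"
    then have i: "i < nt \<psi>" using nt_eq by simp
    have t: "triv (fib C \<psi> i)" using assms(4) i unfolding ft_def' by simp
    note T = TT[OF assms(1,2,3) i t]
    have e: "en \<psi> i 0 < nt \<phi>" using T(1) assms(3) by simp
    show "pull \<psi> ys i \<in> Y" "dY (pull \<psi> ys i) = fib C (cmp C \<psi> \<phi>) i"
      using assms(5) e T(4) i unfolding ysok_def pull_def by auto }
  { assume "nt (cmp C \<psi> \<phi>) \<le> i"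
    then show "pull \<psi> ys i = undefined" using nt_eq unfolding pull_def by simp }
qed

lemma gen_mem:
  assumes "actok X dX rX" "(a, b) \<in> smash_gen C X dX rX Y dY"
  shows "a \<in> tens C X dX Y dY" "b \<in> tens C X dX Y dY" "tdeg C a = tdeg C b"
proof -
  obtain x \<psi> \<phi> ys where h: "x \<in> X" "\<psi> \<in> mor C" "dX x = tgt C \<psi>" "ft \<psi>" "\<phi> \<in> mor C"
    "tgt C \<phi> = src C \<psi>" "ysok Y dY \<phi> ys" "a = (ract rX x \<psi>, \<phi>, ys)" "b = (x, cmp C \<psi> \<phi>, pull \<psi> ys)"
    using assms(2) unfolding gen_iff by blast
  have r: "ract rX x \<psi> \<in> X \<and> dX (ract rX x \<psi>) = src C \<psi>" using actokD[OF assms(1) h(1,2,3,4)] .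
  show "a \<in> tens C X dX Y dY" unfolding h(8) tens_iff using r h by simp
  show "b \<in> tens C X dX Y dY" unfolding h(9) tens_iff
    using h cmp_mor[OF h(5,2,6)] cmp_tgt[OF h(5,2,6)] pull_ok[OF h(2,5,6,4,7)] by simp
  show "tdeg C a = tdeg C b" unfolding h(8,9) tdeg_simp using cmp_src[OF h(5,2,6)] by simp
qed

lemma smash_eq_E: "smash_eq C X dX rX Y dY = (smash_gen C X dX rX Y dY \<union> (smash_gen C X dX rX Y dY)\<inverse>)\<^sup>*"
  unfolding smash_eq_def ..

lemma q_eq: "smash_q C X dX rX Y dY w = smash_q C X dX rX Y dY w' \<longleftrightarrow> (w, w') \<in> smash_eq C X dX rX Y dY"
  unfolding smash_q_def smash_eq_E by (rule E_class_eq)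

lemma q_gen: "(w, w') \<in> smash_gen C X dX rX Y dY \<Longrightarrow> smash_q C X dX rX Y dY w = smash_q C X dX rX Y dY w'"
  unfolding q_eq smash_eq_E by (rule E_gen)

lemma q_rep: "(w, SOME v. v \<in> smash_q C X dX rX Y dY w) \<in> smash_eq C X dX rX Y dY"
  unfolding smash_q_def smash_eq_E by (rule E_rep)

lemma q_rep_q: "smash_q C X dX rX Y dY (SOME v. v \<in> smash_q C X dX rX Y dY w) = smash_q C X dX rX Y dY w"
  using q_rep q_eq by metis

lemma E_mem:
  assumes "actok X dX rX" "(w, w') \<in> smash_eq C X dX rX Y dY" "w \<in> tens C X dX Y dY"
  shows "w' \<in> tens C X dX Y dY \<and> tdeg C w' = tdeg C w"
  using assms(2) unfolding smash_eq_E
proof (induction rule: rtrancl_induct)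
  case base then show ?case using assms(3) by simp
next
  case (step b c)
  then have "(b, c) \<in> smash_gen C X dX rX Y dY \<or> (c, b) \<in> smash_gen C X dX rX Y dY" by auto
  then show ?case using step(3) gen_mem[OF assms(1), of b c] gen_mem[OF assms(1), of c b] by auto
qed

lemma smash_iff: "Q \<in> smash C X dX rX Y dY \<longleftrightarrow> (\<exists>w\<in>tens C X dX Y dY. Q = smash_q C X dX rX Y dY w)"
  unfolding smash_def smash_q_def quotient_def by blast

lemma q_in_smash: "w \<in> tens C X dX Y dY \<Longrightarrow> smash_q C X dX rX Y dY w \<in> smash C X dX rX Y dY"
  unfolding smash_iff by blast

lemma rep_mem:
  assumes "actok X dX rX" "w \<in> tens C X dX Y dY"
  shows "(SOME v. v \<in> smash_q C X dX rX Y dY w) \<in> tens C X dX Y dY"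
    "tdeg C (SOME v. v \<in> smash_q C X dX rX Y dY w) = tdeg C w"
  using E_mem[OF assms(1) q_rep assms(2)] by auto

lemma deg_q:
  assumes "actok X dX rX" "w \<in> tens C X dX Y dY"
  shows "smash_deg C (smash_q C X dX rX Y dY w) = tdeg C w"
  unfolding smash_deg_def using rep_mem(2)[OF assms] .

end

context opc begin

definition actT :: "(('b \<times> 'm \<times> (nat \<Rightarrow> 'o)) \<Rightarrow> 'b) \<Rightarrow> ('a \<times> 'm \<times> (nat \<Rightarrow> 'b)) \<Rightarrow> 'm \<Rightarrow> ('a \<times> 'm \<times> (nat \<Rightarrow> 'b))" where
  "actT rY w \<kappa> = (case w of (x, \<psi>, ys) \<Rightarrow>
     (x, cmp C \<psi> \<kappa>, \<lambda>i. if i < nt \<psi> then ract rY (ys i) (fibm C \<psi> \<kappa> i) else undefined))"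

lemma actT_simp: "actT rY (x, \<psi>, ys) \<kappa> =
     (x, cmp C \<psi> \<kappa>, \<lambda>i. if i < nt \<psi> then ract rY (ys i) (fibm C \<psi> \<kappa> i) else undefined)"
  unfolding actT_def by simp

lemma act_compute:
  assumes "\<psi> \<in> mor C" "\<kappa> \<in> mor C" "tgt C \<kappa> = src C \<psi>"
  shows "tmap C id rY (assoc C ((x, \<psi>, ys), \<kappa>, fibs \<kappa>)) = actT rY (x, \<psi>, ys) \<kappa>"
proof -
  have nt_eq: "nt (cmp C \<psi> \<kappa>) = nt \<psi>" using cmp_tgt[OF assms(2,1,3)] by simp
  have inner: "\<And>i. i < nt \<psi> \<Longrightarrow> (\<lambda>k. if k < crd C (fib C \<psi> i) then fibs \<kappa> (en \<psi> i k) else undefined)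
       = fibs (fibm C \<psi> \<kappa> i)"
  proof -
    fix i assume i: "i < nt \<psi>"
    show "(\<lambda>k. if k < crd C (fib C \<psi> i) then fibs \<kappa> (en \<psi> i k) else undefined) = fibs (fibm C \<psi> \<kappa> i)"
    proof
      fix k show "(if k < crd C (fib C \<psi> i) then fibs \<kappa> (en \<psi> i k) else undefined) = fibs (fibm C \<psi> \<kappa> i) k"
      proof (cases "k < crd C (fib C \<psi> i)")
        case True
        have "en \<psi> i k < nt \<kappa>" using en_props(1)[OF assms(1) i True] assms(3) by simp
        then show ?thesis using True ds1[OF assms(1,2,3) i True] fibm_tgt[OF assms(1,2,3) i]
          unfolding fibs_def by simp
      next
        case False then show ?thesis using fibm_tgt[OF assms(1,2,3) i] unfolding fibs_def by simp
      qed
    qed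
  qed
  have fe: "(\<lambda>i. if i < nt (cmp C \<psi> \<kappa>) then rY (if i < nt \<psi> then (ys i, fibm C \<psi> \<kappa> i,
        \<lambda>k. if k < crd C (fib C \<psi> i) then fibs \<kappa> (en \<psi> i k) else undefined) else undefined) else undefined)
     = (\<lambda>i. if i < nt \<psi> then ract rY (ys i) (fibm C \<psi> \<kappa> i) else undefined)"
  proof
    fix i show "(if i < nt (cmp C \<psi> \<kappa>) then rY (if i < nt \<psi> then (ys i, fibm C \<psi> \<kappa> i,
        \<lambda>k. if k < crd C (fib C \<psi> i) then fibs \<kappa> (en \<psi> i k) else undefined) else undefined) else undefined)
     = (if i < nt \<psi> then ract rY (ys i) (fibm C \<psi> \<kappa> i) else undefined)"
      using inner[of i] nt_eq unfolding ract_def by simp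
  qed
  show ?thesis unfolding assoc_simp tmap_simp actT_simp fe by simp
qed

lemma actT_mem:
  assumes "actok Y dY rY" "(x, \<psi>, ys) \<in> tens C X dX Y dY" "\<kappa> \<in> mor C" "ft \<kappa>" "tgt C \<kappa> = src C \<psi>"
  shows "actT rY (x, \<psi>, ys) \<kappa> \<in> tens C X dX Y dY" "tdeg C (actT rY (x, \<psi>, ys) \<kappa>) = src C \<kappa>"
proof -
  have h: "\<psi> \<in> mor C" "x \<in> X" "dX x = tgt C \<psi>" "ysok Y dY \<psi> ys" using assms(2) unfolding tens_iff by auto
  have ok: "ysok Y dY (cmp C \<psi> \<kappa>) (\<lambda>i. if i < nt \<psi> then ract rY (ys i) (fibm C \<psi> \<kappa> i) else undefined)"
    unfolding ysok_def
  proof (intro conjI allI impI)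
    have nt_eq: "nt (cmp C \<psi> \<kappa>) = nt \<psi>" using cmp_tgt[OF assms(3) h(1) assms(5)] by simp
    fix i
    { assume "i < nt (cmp C \<psi> \<kappa>)"
      then have i: "i < nt \<psi>" using nt_eq by simp
      have y: "ys i \<in> Y" "dY (ys i) = fib C \<psi> i" using h(4) i unfolding ysok_def by auto
      have r: "ract rY (ys i) (fibm C \<psi> \<kappa> i) \<in> Y \<and> dY (ract rY (ys i) (fibm C \<psi> \<kappa> i)) = src C (fibm C \<psi> \<kappa> i)"
        using actokD[OF assms(1) y(1) fibm_mor[OF h(1) assms(3,5) i]] y(2) fibm_tgt[OF h(1) assms(3,5) i]
          ft_fibm[OF h(1) assms(3,5,4) i] by simp
      show "(if i < nt \<psi> then ract rY (ys i) (fibm C \<psi> \<kappa> i) else undefined) \<in> Y"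
        "dY (if i < nt \<psi> then ract rY (ys i) (fibm C \<psi> \<kappa> i) else undefined) = fib C (cmp C \<psi> \<kappa>) i"
        using r i fibm_src[OF h(1) assms(3,5) i] by auto }
    { assume "nt (cmp C \<psi> \<kappa>) \<le> i"
      then show "(if i < nt \<psi> then ract rY (ys i) (fibm C \<psi> \<kappa> i) else undefined) = undefined" using nt_eq by simp }
  qed
  show "actT rY (x, \<psi>, ys) \<kappa> \<in> tens C X dX Y dY" unfolding actT_simp tens_iff
    using ok h cmp_mor[OF assms(3) h(1) assms(5)] cmp_tgt[OF assms(3) h(1) assms(5)] by simp
  show "tdeg C (actT rY (x, \<psi>, ys) \<kappa>) = src C \<kappa>" unfolding actT_simp tdeg_simp
    using cmp_src[OF assms(3) h(1) assms(5)] by simp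
qed

lemma actT_gen:
  assumes "actok X dX rX" "actok Y dY rY" "(a, b) \<in> smash_gen C X dX rX Y dY" "\<kappa> \<in> mor C" "ft \<kappa>"
    "tgt C \<kappa> = tdeg C a"
  shows "(actT rY a \<kappa>, actT rY b \<kappa>) \<in> smash_gen C X dX rX Y dY"
proof -
  obtain x \<psi> \<phi> ys where h: "x \<in> X" "\<psi> \<in> mor C" "dX x = tgt C \<psi>" "ft \<psi>" "\<phi> \<in> mor C"
    "tgt C \<phi> = src C \<psi>" "ysok Y dY \<phi> ys" "a = (ract rX x \<psi>, \<phi>, ys)" "b = (x, cmp C \<psi> \<phi>, pull \<psi> ys)"
    using assms(3) unfolding gen_iff by blast
  have k: "tgt C \<kappa> = src C \<phi>" using assms(6) h(8) tdeg_simp by simp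
  let ?YS = "\<lambda>j. if j < nt \<phi> then ract rY (ys j) (fibm C \<phi> \<kappa> j) else undefined"
  have amem: "a \<in> tens C X dX Y dY" using gen_mem(1)[OF assms(1,3)] .
  have ok: "ysok Y dY (cmp C \<phi> \<kappa>) ?YS"
    using actT_mem(1)[OF assms(2) amem[unfolded h(8)] assms(4,5) k] unfolding actT_simp tens_iff by simp
  have m1: "cmp C \<phi> \<kappa> \<in> mor C" "tgt C (cmp C \<phi> \<kappa>) = src C \<psi>"
    using cmp_mor[OF assms(4) h(5) k] cmp_tgt[OF assms(4) h(5) k] h(6) by auto
  have ea: "actT rY a \<kappa> = (ract rX x \<psi>, cmp C \<phi> \<kappa>, ?YS)" unfolding h(8) actT_simp ..
  have nt_eq: "nt (cmp C \<psi> \<phi>) = nt \<psi>" using cmp_tgt[OF h(5,2,6)] by simp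
  have third: "(\<lambda>i. if i < nt (cmp C \<psi> \<phi>) then ract rY (pull \<psi> ys i) (fibm C (cmp C \<psi> \<phi>) \<kappa> i) else undefined)
      = pull \<psi> ?YS"
  proof
    fix i show "(if i < nt (cmp C \<psi> \<phi>) then ract rY (pull \<psi> ys i) (fibm C (cmp C \<psi> \<phi>) \<kappa> i) else undefined)
      = pull \<psi> ?YS i"
    proof (cases "i < nt \<psi>")
      case True
      have t: "triv (fib C \<psi> i)" using h(4) True unfolding ft_def' by simp
      note T = TT[OF h(2,5,6) True t]
      have e: "en \<psi> i 0 < nt \<phi>" using T(1) h(6) by simp
      show ?thesis using True nt_eq e T(5)[OF assms(4) k] unfolding pull_def by simp
    next
      case False then show ?thesis using nt_eq unfolding pull_def by simp
    qed
  qed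
  have eb: "actT rY b \<kappa> = (x, cmp C \<psi> (cmp C \<phi> \<kappa>), pull \<psi> ?YS)"
    unfolding h(9) actT_simp third using cmp_assoc[OF assms(4) h(5,2) k h(6)] by simp
  show ?thesis unfolding gen_iff ea eb using h(1-4) m1 ok by blast
qed

lemma actT_E:
  assumes "actok X dX rX" "actok Y dY rY" "(w, w') \<in> smash_eq C X dX rX Y dY" "w \<in> tens C X dX Y dY"
    "\<kappa> \<in> mor C" "ft \<kappa>" "tgt C \<kappa> = tdeg C w"
  shows "(actT rY w \<kappa>, actT rY w' \<kappa>) \<in> smash_eq C X dX rX Y dY"
  using assms(3) unfolding smash_eq_E
proof (induction rule: rtrancl_induct)
  case base then show ?case by simp
next
  case (step b c)
  have "(w, b) \<in> smash_eq C X dX rX Y dY" using step(1) unfolding smash_eq_E .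
  then have bm: "b \<in> tens C X dX Y dY \<and> tdeg C b = tdeg C w" using E_mem[OF assms(1) _ assms(4)] by blast
  have "(b, c) \<in> smash_gen C X dX rX Y dY \<or> (c, b) \<in> smash_gen C X dX rX Y dY" using step(2) by auto
  then have "(actT rY b \<kappa>, actT rY c \<kappa>) \<in> (smash_gen C X dX rX Y dY \<union> (smash_gen C X dX rX Y dY)\<inverse>)"
  proof
    assume g: "(b, c) \<in> smash_gen C X dX rX Y dY"
    show ?thesis using actT_gen[OF assms(1,2) g assms(5,6)] bm assms(7) by simp
  next
    assume g: "(c, b) \<in> smash_gen C X dX rX Y dY"
    have "tdeg C c = tdeg C b" using gen_mem(3)[OF assms(1) g] .
    then show ?thesis using actT_gen[OF assms(1,2) g assms(5,6)] bm assms(7) by simp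
  qed
  then show ?case using step(3) by (meson rtrancl.rtrancl_into_rtrancl)
qed

lemma L_act:
  assumes "actok X dX rX" "actok Y dY rY" "w \<in> tens C X dX Y dY"
    "\<kappa> \<in> mor C" "ft \<kappa>" "tgt C \<kappa> = tdeg C w"
  shows "smash_act C X dX rX Y dY rY (smash_q C X dX rX Y dY w, \<kappa>, fibs \<kappa>)
       = smash_q C X dX rX Y dY (actT rY w \<kappa>)"
proof -
  let ?r = "SOME v. v \<in> smash_q C X dX rX Y dY w"
  have wr: "(w, ?r) \<in> smash_eq C X dX rX Y dY" by (rule q_rep)
  have rm: "?r \<in> tens C X dX Y dY" "tdeg C ?r = tdeg C w" using rep_mem[OF assms(1,3)] by auto
  obtain x \<psi> ys where r: "?r = (x, \<psi>, ys)" by (cases ?r) blast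
  have \<psi>: "\<psi> \<in> mor C" "tgt C \<kappa> = src C \<psi>" using rm assms(6) unfolding r tens_iff tdeg_simp by auto
  have "smash_act C X dX rX Y dY rY (smash_q C X dX rX Y dY w, \<kappa>, fibs \<kappa>) =
     smash_q C X dX rX Y dY (actT rY ?r \<kappa>)"
  proof -
    have "smash_act C X dX rX Y dY rY (smash_q C X dX rX Y dY w, \<kappa>, fibs \<kappa>) =
       smash_q C X dX rX Y dY (tmap C id rY (assoc C (?r, \<kappa>, fibs \<kappa>)))"
      unfolding smash_act_def by simp
    also have "\<dots> = smash_q C X dX rX Y dY (actT rY ?r \<kappa>)"
      unfolding r using act_compute[OF \<psi>(1) assms(4) \<psi>(2), of rY x ys] by simp
    finally show ?thesis .
  qed
  also have "\<dots> = smash_q C X dX rX Y dY (actT rY w \<kappa>)"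
  proof -
    have "(actT rY w \<kappa>, actT rY ?r \<kappa>) \<in> smash_eq C X dX rX Y dY"
      using actT_E[OF assms(1,2) wr assms(3,4,5,6)] .
    then have "(actT rY ?r \<kappa>, actT rY w \<kappa>) \<in> smash_eq C X dX rX Y dY"
      unfolding smash_eq_E by (rule E_sym)
    then show ?thesis unfolding q_eq .
  qed
  finally show ?thesis .
qed

lemma actok_P:
  assumes "actok X dX rX" "actok Y dY rY"
  shows "actok (smash C X dX rX Y dY) (smash_deg C) (smash_act C X dX rX Y dY rY)"
  unfolding actok_def
proof (intro allI impI, elim conjE)
  fix Q f assume h: "Q \<in> smash C X dX rX Y dY" "f \<in> mor C" "smash_deg C Q = tgt C f" "ft f"
  obtain w where w: "w \<in> tens C X dX Y dY" "Q = smash_q C X dX rX Y dY w" using h(1) smash_iff by blast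
  have d: "tgt C f = tdeg C w" using h(3) deg_q[OF assms(1) w(1)] w(2) by simp
  obtain x \<psi> ys where wx: "w = (x, \<psi>, ys)" by (cases w) blast
  have k: "tgt C f = src C \<psi>" using d wx tdeg_simp by simp
  have e: "ract (smash_act C X dX rX Y dY rY) Q f = smash_q C X dX rX Y dY (actT rY w f)"
    unfolding ract_def w(2) using L_act[OF assms w(1) h(2,4) d] .
  have m: "actT rY w f \<in> tens C X dX Y dY" "tdeg C (actT rY w f) = src C f"
    using actT_mem[OF assms(2) w(1)[unfolded wx] h(2,4) k] wx by auto
  show "ract (smash_act C X dX rX Y dY rY) Q f \<in> smash C X dX rX Y dY \<and>
       smash_deg C (ract (smash_act C X dX rX Y dY rY) Q f) = src C f"
    unfolding e using q_in_smash[OF m(1)] deg_q[OF assms(1) m(1)] m(2) by simp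
qed

end

context opc begin

definition inz :: "'m \<Rightarrow> (nat \<Rightarrow> 'c) \<Rightarrow> nat \<Rightarrow> nat \<Rightarrow> 'c" where
  "inz \<psi> zs i = (\<lambda>k. if k < crd C (fib C \<psi> i) then zs (en \<psi> i k) else undefined)"

lemma tassoc_simp:
  assumes "\<psi> \<in> mor C" "\<phi> \<in> mor C" "tgt C \<phi> = src C \<psi>"
  shows "tmap C id g (assoc C ((x, \<psi>, ys), \<phi>, zs)) =
    (x, cmp C \<psi> \<phi>, \<lambda>i. if i < nt \<psi> then g (ys i, fibm C \<psi> \<phi> i, inz \<psi> zs i) else undefined)"
proof -
  have nt_eq: "nt (cmp C \<psi> \<phi>) = nt \<psi>" using cmp_tgt[OF assms(2,1,3)] by simp
  show ?thesis unfolding assoc_simp tmap_simp nt_eq inz_def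
    by (simp add: if_distrib cong: if_cong)
qed

lemma inz_ok:
  assumes "\<psi> \<in> mor C" "\<phi> \<in> mor C" "tgt C \<phi> = src C \<psi>" "ysok Z dZ \<phi> zs" "i < nt \<psi>"
  shows "ysok Z dZ (fibm C \<psi> \<phi> i) (inz \<psi> zs i)"
  unfolding ysok_def
proof (intro conjI allI impI)
  have tg: "tgt C (fibm C \<psi> \<phi> i) = fib C \<psi> i" using fibm_tgt[OF assms(1,2,3,5)] .
  fix k
  { assume "k < nt (fibm C \<psi> \<phi> i)"
    then have k: "k < crd C (fib C \<psi> i)" using tg by simp
    have e: "en \<psi> i k < nt \<phi>" using en_props(1)[OF assms(1,5) k] assms(3) by simp
    show "inz \<psi> zs i k \<in> Z" "dZ (inz \<psi> zs i k) = fib C (fibm C \<psi> \<phi> i) k"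
      using assms(4) e k ds1[OF assms(1,2,3,5) k] unfolding ysok_def inz_def by auto }
  { assume "nt (fibm C \<psi> \<phi> i) \<le> k"
    then show "inz \<psi> zs i k = undefined" using tg unfolding inz_def by simp }
qed

lemma tassoc_mem:
  assumes aY: "actok Y dY rY" and w: "(x, \<psi>, ys) \<in> tens C X dX Y dY" and \<phi>: "\<phi> \<in> mor C" "tgt C \<phi> = src C \<psi>"
    and zs: "ysok Z dZ \<phi> zs"
  shows "\<And>i. i < nt \<psi> \<Longrightarrow> (ys i, fibm C \<psi> \<phi> i, inz \<psi> zs i) \<in> tens C Y dY Z dZ"
    "\<And>i. i < nt \<psi> \<Longrightarrow> tdeg C (ys i, fibm C \<psi> \<phi> i, inz \<psi> zs i) = fib C (cmp C \<psi> \<phi>) i"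
    "tmap C id (smash_q C Y dY rY Z dZ) (assoc C ((x, \<psi>, ys), \<phi>, zs))
       \<in> tens C X dX (smash C Y dY rY Z dZ) (smash_deg C)"
proof -
  have h: "\<psi> \<in> mor C" "x \<in> X" "dX x = tgt C \<psi>" "ysok Y dY \<psi> ys" using w unfolding tens_iff by auto
  show m: "\<And>i. i < nt \<psi> \<Longrightarrow> (ys i, fibm C \<psi> \<phi> i, inz \<psi> zs i) \<in> tens C Y dY Z dZ"
  proof -
    fix i assume i: "i < nt \<psi>"
    show "(ys i, fibm C \<psi> \<phi> i, inz \<psi> zs i) \<in> tens C Y dY Z dZ" unfolding tens_iff
      using fibm_mor[OF h(1) \<phi> i] fibm_tgt[OF h(1) \<phi> i] h(4) i inz_ok[OF h(1) \<phi> zs i]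
      unfolding ysok_def by auto
  qed
  show d: "\<And>i. i < nt \<psi> \<Longrightarrow> tdeg C (ys i, fibm C \<psi> \<phi> i, inz \<psi> zs i) = fib C (cmp C \<psi> \<phi>) i"
    unfolding tdeg_simp using fibm_src[OF h(1) \<phi>] by simp
  have nt_eq: "nt (cmp C \<psi> \<phi>) = nt \<psi>" using cmp_tgt[OF \<phi>(1) h(1) \<phi>(2)] by simp
  have ok: "ysok (smash C Y dY rY Z dZ) (smash_deg C) (cmp C \<psi> \<phi>)
     (\<lambda>i. if i < nt \<psi> then smash_q C Y dY rY Z dZ (ys i, fibm C \<psi> \<phi> i, inz \<psi> zs i) else undefined)"
    unfolding ysok_def nt_eq using q_in_smash[OF m] deg_q[OF aY m] d by auto
  show "tmap C id (smash_q C Y dY rY Z dZ) (assoc C ((x, \<psi>, ys), \<phi>, zs))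
       \<in> tens C X dX (smash C Y dY rY Z dZ) (smash_deg C)"
    unfolding tassoc_simp[OF h(1) \<phi>] tens_iff using ok h cmp_mor[OF \<phi>(1) h(1) \<phi>(2)]
      cmp_tgt[OF \<phi>(1) h(1) \<phi>(2)] by simp
qed

lemma IDX:
  assumes "\<psi>0 \<in> mor C" "\<kappa> \<in> mor C" "tgt C \<kappa> = src C \<psi>0" "ft \<kappa>" "i < nt \<psi>0"
    "k < crd C (fib C \<psi>0 i)"
  shows "en (cmp C \<psi>0 \<kappa>) i (en (fibm C \<psi>0 \<kappa> i) k 0) = en \<kappa> (en \<psi>0 i k) 0"
proof -
  let ?\<rho> = "fibm C \<psi>0 \<kappa> i"
  have \<rho>: "?\<rho> \<in> mor C" "ft ?\<rho>" "tgt C ?\<rho> = fib C \<psi>0 i" "src C ?\<rho> = fib C (cmp C \<psi>0 \<kappa>) i"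
    using fibm_mor[OF assms(1,2,3,5)] ft_fibm[OF assms(1,2,3,4,5)] fibm_tgt[OF assms(1,2,3,5)]
      fibm_src[OF assms(1,2,3,5)] by auto
  let ?l = "en ?\<rho> k 0"
  have l: "?l < crd C (fib C (cmp C \<psi>0 \<kappa>) i)" "crdm C ?\<rho> ?l = k"
    using FTU(1)[OF \<rho>(1,2), of k] assms(6) \<rho>(3,4) by auto
  have m: "cmp C \<psi>0 \<kappa> \<in> mor C" using cmp_mor[OF assms(2,1,3)] .
  have i': "i < nt (cmp C \<psi>0 \<kappa>)" using assms(5) cmp_tgt[OF assms(2,1,3)] by simp
  let ?a = "en (cmp C \<psi>0 \<kappa>) i ?l"
  have a: "?a < ns \<kappa>" "crdm C (cmp C \<psi>0 \<kappa>) ?a = i"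
    using en_props(1,2)[OF m i' l(1)] cmp_src[OF assms(2,1,3)] by auto
  have cr: "crdm C ?\<rho> ?l = rk \<psi>0 i (crdm C \<kappa> ?a)" using crdm_fibm[OF assms(1,2,3,5) l(1)] .
  have ka: "crdm C \<kappa> ?a < ns \<psi>0" using crdm_lt[OF assms(2) a(1)] assms(3) by simp
  have pk: "crdm C \<psi>0 (crdm C \<kappa> ?a) = i" using a(2) crdm_cmp[OF assms(2,1,3) a(1)] by simp
  have "en \<psi>0 i k = crdm C \<kappa> ?a"
    using rk_props(2)[OF assms(1) ka] pk cr l(2) by simp
  then show ?thesis using FTU(2)[OF assms(2,4) a(1)] by simp
qed

end

locale three = opc C for C :: "('o, 'm) opcat" +
  fixes X :: "'a set" and dX :: "'a \<Rightarrow> 'o" and rX :: "('a \<times> 'm \<times> (nat \<Rightarrow> 'o)) \<Rightarrow> 'a"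
    and Y :: "'b set" and dY :: "'b \<Rightarrow> 'o" and rY :: "('b \<times> 'm \<times> (nat \<Rightarrow> 'o)) \<Rightarrow> 'b"
    and Z :: "'c set" and dZ :: "'c \<Rightarrow> 'o" and rZ :: "('c \<times> 'm \<times> (nat \<Rightarrow> 'o)) \<Rightarrow> 'c"
  assumes mX: "rmodule C X dX rX" and mY: "rmodule C Y dY rY" and mZ: "rmodule C Z dZ rZ"
begin

abbreviation "qXY \<equiv> smash_q C X dX rX Y dY"
abbreviation "qYZ \<equiv> smash_q C Y dY rY Z dZ"
abbreviation "P \<equiv> smash C X dX rX Y dY"
abbreviation "YZ \<equiv> smash C Y dY rY Z dZ"
abbreviation "rP \<equiv> smash_act C X dX rX Y dY rY"
abbreviation "q1 \<equiv> smash_q C P (smash_deg C) rP Z dZ"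
abbreviation "q2 \<equiv> smash_q C X dX rX YZ (smash_deg C)"
abbreviation "T1 \<equiv> tens C P (smash_deg C) Z dZ"
abbreviation "T2 \<equiv> tens C X dX YZ (smash_deg C)"

lemma aX: "actok X dX rX" using actok_rmod[OF mX] .
lemma aY: "actok Y dY rY" using actok_rmod[OF mY] .
lemma aP: "actok P (smash_deg C) rP" using actok_P[OF aX aY] .

definition G where "G w \<phi> zs = q2 (tmap C id qYZ (assoc C (w, \<phi>, zs)))"
definition F where "F t = (case t of (Qxy, \<phi>, zs) \<Rightarrow> G (SOME w. w \<in> Qxy) \<phi> zs)"

lemma L1_gen:
  assumes g: "(a, b) \<in> smash_gen C X dX rX Y dY" and \<phi>: "\<phi> \<in> mor C" "tgt C \<phi> = tdeg C a"
    and zs: "ysok Z dZ \<phi> zs"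
  shows "G a \<phi> zs = G b \<phi> zs"
proof -
  obtain x \<psi> \<phi>1 ys where h: "x \<in> X" "\<psi> \<in> mor C" "dX x = tgt C \<psi>" "ft \<psi>" "\<phi>1 \<in> mor C"
    "tgt C \<phi>1 = src C \<psi>" "ysok Y dY \<phi>1 ys" "a = (ract rX x \<psi>, \<phi>1, ys)" "b = (x, cmp C \<psi> \<phi>1, pull \<psi> ys)"
    using g unfolding gen_iff by blast
  have t: "tgt C \<phi> = src C \<phi>1" using \<phi>(2) h(8) tdeg_simp by simp
  have am: "a \<in> tens C X dX Y dY" using gen_mem(1)[OF aX g] .
  let ?WS = "\<lambda>i. if i < nt \<phi>1 then qYZ (ys i, fibm C \<phi>1 \<phi> i, inz \<phi>1 zs i) else undefined"
  have ea: "tmap C id qYZ (assoc C (a, \<phi>, zs)) = (ract rX x \<psi>, cmp C \<phi>1 \<phi>, ?WS)"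
    unfolding h(8) tassoc_simp[OF h(5) \<phi>(1) t] ..
  have ok: "ysok YZ (smash_deg C) (cmp C \<phi>1 \<phi>) ?WS"
    using tassoc_mem(3)[OF aY am[unfolded h(8)] \<phi>(1) t zs] unfolding tassoc_simp[OF h(5) \<phi>(1) t] tens_iff
    by simp
  have m1: "cmp C \<psi> \<phi>1 \<in> mor C" "tgt C \<phi> = src C (cmp C \<psi> \<phi>1)"
    using cmp_mor[OF h(5,2,6)] cmp_src[OF h(5,2,6)] t by auto
  have nt_eq: "nt (cmp C \<psi> \<phi>1) = nt \<psi>" using cmp_tgt[OF h(5,2,6)] by simp
  have third: "(\<lambda>i. if i < nt (cmp C \<psi> \<phi>1) then qYZ (pull \<psi> ys i, fibm C (cmp C \<psi> \<phi>1) \<phi> i,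
        inz (cmp C \<psi> \<phi>1) zs i) else undefined) = pull \<psi> ?WS"
  proof
    fix i show "(if i < nt (cmp C \<psi> \<phi>1) then qYZ (pull \<psi> ys i, fibm C (cmp C \<psi> \<phi>1) \<phi> i,
        inz (cmp C \<psi> \<phi>1) zs i) else undefined) = pull \<psi> ?WS i"
    proof (cases "i < nt \<psi>")
      case True
      have tr: "triv (fib C \<psi> i)" using h(4) True unfolding ft_def' by simp
      note T = TT[OF h(2,5,6) True tr]
      have e: "en \<psi> i 0 < nt \<phi>1" using T(1) h(6) by simp
      have iz: "inz \<phi>1 zs (en \<psi> i 0) = inz (cmp C \<psi> \<phi>1) zs i"
        unfolding inz_def T(4) T(6) ..
      show ?thesis using True nt_eq e T(5)[OF \<phi>(1) t] iz unfolding pull_def by simp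
    next
      case False then show ?thesis using nt_eq unfolding pull_def by simp
    qed
  qed
  have eb: "tmap C id qYZ (assoc C (b, \<phi>, zs)) = (x, cmp C \<psi> (cmp C \<phi>1 \<phi>), pull \<psi> ?WS)"
    unfolding h(9) tassoc_simp[OF m1(1) \<phi>(1) m1(2)] third using cmp_assoc[OF \<phi>(1) h(5,2) t h(6)] by simp
  have c2: "cmp C \<phi>1 \<phi> \<in> mor C" "tgt C (cmp C \<phi>1 \<phi>) = src C \<psi>"
    using cmp_mor[OF \<phi>(1) h(5) t] cmp_tgt[OF \<phi>(1) h(5) t] h(6) by auto
  have "(tmap C id qYZ (assoc C (a, \<phi>, zs)), tmap C id qYZ (assoc C (b, \<phi>, zs))) \<in> smash_gen C X dX rX YZ (smash_deg C)"
    unfolding gen_iff ea eb using h(1-4) c2 ok by blast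
  then show ?thesis unfolding G_def by (rule q_gen)
qed

lemma L1:
  assumes "(w, w') \<in> smash_eq C X dX rX Y dY" "w \<in> tens C X dX Y dY" "\<phi> \<in> mor C" "tgt C \<phi> = tdeg C w"
    "ysok Z dZ \<phi> zs"
  shows "G w \<phi> zs = G w' \<phi> zs"
  using assms(1) unfolding smash_eq_E
proof (induction rule: rtrancl_induct)
  case base then show ?case by simp
next
  case (step b c)
  have "(w, b) \<in> smash_eq C X dX rX Y dY" using step(1) unfolding smash_eq_E .
  then have bm: "b \<in> tens C X dX Y dY \<and> tdeg C b = tdeg C w" using E_mem[OF aX _ assms(2)] by blast
  have "(b, c) \<in> smash_gen C X dX rX Y dY \<or> (c, b) \<in> smash_gen C X dX rX Y dY" using step(2) by auto
  then have "G b \<phi> zs = G c \<phi> zs"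
  proof
    assume g: "(b, c) \<in> smash_gen C X dX rX Y dY"
    show ?thesis using L1_gen[OF g assms(3) _ assms(5)] bm assms(4) by simp
  next
    assume g: "(c, b) \<in> smash_gen C X dX rX Y dY"
    have "tdeg C c = tdeg C b" using gen_mem(3)[OF aX g] .
    then show ?thesis using L1_gen[OF g assms(3) _ assms(5)] bm assms(4) by simp
  qed
  then show ?case using step(3) by simp
qed

lemma L1_rep:
  assumes "w \<in> tens C X dX Y dY" "\<phi> \<in> mor C" "tgt C \<phi> = tdeg C w" "ysok Z dZ \<phi> zs"
  shows "G (SOME v. v \<in> qXY w) \<phi> zs = G w \<phi> zs"
  using L1[OF q_rep assms] by simp

end

context three begin

lemma rep_P:
  assumes "Q \<in> P"
  shows "(SOME v. v \<in> Q) \<in> tens C X dX Y dY" "Q = qXY (SOME v. v \<in> Q)"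
    "tdeg C (SOME v. v \<in> Q) = smash_deg C Q"
proof -
  obtain w where w: "w \<in> tens C X dX Y dY" "Q = qXY w" using assms smash_iff by blast
  show "(SOME v. v \<in> Q) \<in> tens C X dX Y dY" using rep_mem(1)[OF aX w(1)] w(2) by simp
  show "Q = qXY (SOME v. v \<in> Q)" using q_rep_q[of X dX rX Y dY w] w(2) by simp
  show "tdeg C (SOME v. v \<in> Q) = smash_deg C Q" unfolding smash_deg_def ..
qed

lemma G_act:
  assumes w0: "(x, \<psi>0, ys) \<in> tens C X dX Y dY" and \<kappa>: "\<kappa> \<in> mor C" "ft \<kappa>" "tgt C \<kappa> = src C \<psi>0"
    and \<phi>: "\<phi> \<in> mor C" "tgt C \<phi> = src C \<kappa>" and zs: "ysok Z dZ \<phi> zs"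
  shows "G (actT rY (x, \<psi>0, ys) \<kappa>) \<phi> zs = G (x, \<psi>0, ys) (cmp C \<kappa> \<phi>) (pull \<kappa> zs)"
proof -
  have h: "\<psi>0 \<in> mor C" "x \<in> X" "dX x = tgt C \<psi>0" "ysok Y dY \<psi>0 ys" using w0 unfolding tens_iff by auto
  let ?YS = "\<lambda>i. if i < nt \<psi>0 then ract rY (ys i) (fibm C \<psi>0 \<kappa> i) else undefined"
  have pk: "cmp C \<psi>0 \<kappa> \<in> mor C" "tgt C \<phi> = src C (cmp C \<psi>0 \<kappa>)" "nt (cmp C \<psi>0 \<kappa>) = nt \<psi>0"
    using cmp_mor[OF \<kappa>(1) h(1) \<kappa>(3)] cmp_src[OF \<kappa>(1) h(1) \<kappa>(3)] cmp_tgt[OF \<kappa>(1) h(1) \<kappa>(3)] \<phi>(2) by auto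
  have kp: "cmp C \<kappa> \<phi> \<in> mor C" "tgt C (cmp C \<kappa> \<phi>) = src C \<psi>0"
    using cmp_mor[OF \<phi>(1) \<kappa>(1) \<phi>(2)] cmp_tgt[OF \<phi>(1) \<kappa>(1) \<phi>(2)] \<kappa>(3) by auto
  have am: "actT rY (x, \<psi>0, ys) \<kappa> \<in> tens C X dX Y dY" using actT_mem(1)[OF aY w0 \<kappa>] .
  have l: "tmap C id qYZ (assoc C (actT rY (x, \<psi>0, ys) \<kappa>, \<phi>, zs)) =
     (x, cmp C (cmp C \<psi>0 \<kappa>) \<phi>, \<lambda>i. if i < nt \<psi>0 then qYZ (?YS i, fibm C (cmp C \<psi>0 \<kappa>) \<phi> i,
        inz (cmp C \<psi>0 \<kappa>) zs i) else undefined)"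
    unfolding actT_simp tassoc_simp[OF pk(1) \<phi>(1) pk(2)] pk(3) ..
  have r: "tmap C id qYZ (assoc C ((x, \<psi>0, ys), cmp C \<kappa> \<phi>, pull \<kappa> zs)) =
     (x, cmp C \<psi>0 (cmp C \<kappa> \<phi>), \<lambda>i. if i < nt \<psi>0 then qYZ (ys i, fibm C \<psi>0 (cmp C \<kappa> \<phi>) i,
        inz \<psi>0 (pull \<kappa> zs) i) else undefined)"
    unfolding tassoc_simp[OF h(1) kp] ..
  have comp: "\<And>i. i < nt \<psi>0 \<Longrightarrow> qYZ (?YS i, fibm C (cmp C \<psi>0 \<kappa>) \<phi> i, inz (cmp C \<psi>0 \<kappa>) zs i) =
      qYZ (ys i, fibm C \<psi>0 (cmp C \<kappa> \<phi>) i, inz \<psi>0 (pull \<kappa> zs) i)"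
  proof -
    fix i assume i: "i < nt \<psi>0"
    let ?\<rho> = "fibm C \<psi>0 \<kappa> i" and ?\<phi>' = "fibm C (cmp C \<psi>0 \<kappa>) \<phi> i" and ?z = "inz (cmp C \<psi>0 \<kappa>) zs i"
    have i': "i < nt (cmp C \<psi>0 \<kappa>)" using i pk(3) by simp
    have \<rho>: "?\<rho> \<in> mor C" "ft ?\<rho>" "tgt C ?\<rho> = fib C \<psi>0 i" "src C ?\<rho> = fib C (cmp C \<psi>0 \<kappa>) i"
      using fibm_mor[OF h(1) \<kappa>(1,3) i] ft_fibm[OF h(1) \<kappa>(1,3,2) i] fibm_tgt[OF h(1) \<kappa>(1,3) i]
        fibm_src[OF h(1) \<kappa>(1,3) i] by auto
    have \<phi>': "?\<phi>' \<in> mor C" "tgt C ?\<phi>' = src C ?\<rho>"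
      using fibm_mor[OF pk(1) \<phi>(1) pk(2) i'] fibm_tgt[OF pk(1) \<phi>(1) pk(2) i'] \<rho>(4) by auto
    have zok: "ysok Z dZ ?\<phi>' ?z" using inz_ok[OF pk(1) \<phi>(1) pk(2) zs i'] .
    have y: "ys i \<in> Y" "dY (ys i) = tgt C ?\<rho>" using h(4) i \<rho>(3) unfolding ysok_def by auto
    have c: "cmp C ?\<rho> ?\<phi>' = fibm C \<psi>0 (cmp C \<kappa> \<phi>) i"
      using fibm_cmp[OF h(1) \<kappa>(1) \<phi>(1) \<phi>(2) \<kappa>(3) i] by simp
    have pz: "pull ?\<rho> ?z = inz \<psi>0 (pull \<kappa> zs) i"
    proof
      fix k show "pull ?\<rho> ?z k = inz \<psi>0 (pull \<kappa> zs) i k"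
      proof (cases "k < crd C (fib C \<psi>0 i)")
        case True
        have k': "k < nt ?\<rho>" using True \<rho>(3) by simp
        have l: "en ?\<rho> k 0 < crd C (fib C (cmp C \<psi>0 \<kappa>) i)" using FTU(1)[OF \<rho>(1,2) k'] \<rho>(4) by simp
        have e: "en \<psi>0 i k < nt \<kappa>" using en_props(1)[OF h(1) i True] \<kappa>(3) by simp
        show ?thesis using True k' l e IDX[OF h(1) \<kappa>(1,3,2) i True] unfolding pull_def inz_def by simp
      next
        case False then show ?thesis using \<rho>(3) unfolding pull_def inz_def by simp
      qed
    qed
    have "(?YS i, ?\<phi>', ?z) = (ract rY (ys i) ?\<rho>, ?\<phi>', ?z)" using i by simp
    moreover have "((ract rY (ys i) ?\<rho>, ?\<phi>', ?z), (ys i, cmp C ?\<rho> ?\<phi>', pull ?\<rho> ?z)) \<in> smash_gen C Y dY rY Z dZ"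
      unfolding gen_iff using y \<rho>(1,2) \<phi>' zok by blast
    ultimately show "qYZ (?YS i, ?\<phi>', ?z) = qYZ (ys i, fibm C \<psi>0 (cmp C \<kappa> \<phi>) i, inz \<psi>0 (pull \<kappa> zs) i)"
      using q_gen c pz by metis
  qed
  have fe: "(\<lambda>i. if i < nt \<psi>0 then qYZ (?YS i, fibm C (cmp C \<psi>0 \<kappa>) \<phi> i,
        inz (cmp C \<psi>0 \<kappa>) zs i) else undefined) = (\<lambda>i. if i < nt \<psi>0 then qYZ (ys i, fibm C \<psi>0 (cmp C \<kappa> \<phi>) i,
        inz \<psi>0 (pull \<kappa> zs) i) else undefined)"
    using comp by (intro ext) simp
  show ?thesis unfolding G_def l r fe using cmp_assoc[OF \<phi>(1) \<kappa>(1) h(1) \<phi>(2) \<kappa>(3)] by simp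
qed

lemma L2_gen:
  assumes g: "(a, b) \<in> smash_gen C P (smash_deg C) rP Z dZ"
  shows "F a = F b"
proof -
  obtain Q \<kappa> \<phi> zs where h: "Q \<in> P" "\<kappa> \<in> mor C" "smash_deg C Q = tgt C \<kappa>" "ft \<kappa>" "\<phi> \<in> mor C"
    "tgt C \<phi> = src C \<kappa>" "ysok Z dZ \<phi> zs" "a = (ract rP Q \<kappa>, \<phi>, zs)" "b = (Q, cmp C \<kappa> \<phi>, pull \<kappa> zs)"
    using g unfolding gen_iff by blast
  let ?w0 = "SOME v. v \<in> Q"
  note r = rep_P[OF h(1)]
  obtain x \<psi>0 ys where wx: "?w0 = (x, \<psi>0, ys)" by (cases ?w0) blast
  have w0: "(x, \<psi>0, ys) \<in> tens C X dX Y dY" using r(1) wx by simp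
  have td: "tgt C \<kappa> = src C \<psi>0" using r(3) h(3) wx by (simp add: tdeg_simp)
  have ra: "ract rP Q \<kappa> = qXY (actT rY (x, \<psi>0, ys) \<kappa>)"
    unfolding ract_def using L_act[OF aX aY w0 h(2,4)] td r(2) wx by (simp add: tdeg_simp)
  have am: "actT rY (x, \<psi>0, ys) \<kappa> \<in> tens C X dX Y dY" "tdeg C (actT rY (x, \<psi>0, ys) \<kappa>) = src C \<kappa>"
    using actT_mem[OF aY w0 h(2,4) td] by auto
  have "F a = G (SOME v. v \<in> qXY (actT rY (x, \<psi>0, ys) \<kappa>)) \<phi> zs" unfolding F_def h(8) ra by simp
  also have "\<dots> = G (actT rY (x, \<psi>0, ys) \<kappa>) \<phi> zs" using L1_rep[OF am(1) h(5) _ h(7)] am(2) h(6) by simp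
  also have "\<dots> = G (x, \<psi>0, ys) (cmp C \<kappa> \<phi>) (pull \<kappa> zs)" using G_act[OF w0 h(2,4) td h(5,6,7)] .
  also have "\<dots> = F b" unfolding F_def h(9) using wx by simp
  finally show ?thesis .
qed

lemma F_E:
  assumes "(t, t') \<in> smash_eq C P (smash_deg C) rP Z dZ" "t \<in> T1"
  shows "F t = F t'"
  using assms(1) unfolding smash_eq_E
proof (induction rule: rtrancl_induct)
  case base then show ?case by simp
next
  case (step b c)
  have "(b, c) \<in> smash_gen C P (smash_deg C) rP Z dZ \<or> (c, b) \<in> smash_gen C P (smash_deg C) rP Z dZ"
    using step(2) by auto
  then have "F b = F c" using L2_gen by metis
  then show ?case using step(3) by simp
qed

lemma SA:
  assumes "t \<in> T1"
  shows "smash_assoc C X dX rX Y dY rY Z dZ (q1 t) = F t"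
proof -
  have "smash_assoc C X dX rX Y dY rY Z dZ (q1 t) = F (SOME v. v \<in> q1 t)"
    unfolding smash_assoc_def F_def G_def by (simp add: case_prod_beta)
  also have "\<dots> = F t" using F_E[OF q_rep assms] by simp
  finally show ?thesis .
qed

lemma F_mem:
  assumes "t \<in> T1"
  shows "F t \<in> smash C X dX rX YZ (smash_deg C)"
proof -
  obtain Qxy \<phi> zs where t: "t = (Qxy, \<phi>, zs)" by (cases t) blast
  have h: "\<phi> \<in> mor C" "Qxy \<in> P" "smash_deg C Qxy = tgt C \<phi>" "ysok Z dZ \<phi> zs"
    using assms unfolding t tens_iff by auto
  note r = rep_P[OF h(2)]
  obtain x \<psi> ys where wx: "(SOME v. v \<in> Qxy) = (x, \<psi>, ys)" by (cases "SOME v. v \<in> Qxy") blast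
  have w: "(x, \<psi>, ys) \<in> tens C X dX Y dY" "tgt C \<phi> = src C \<psi>" using r(1,3) h(3) wx by (auto simp: tdeg_simp)
  have "F t = q2 (tmap C id qYZ (assoc C ((x, \<psi>, ys), \<phi>, zs)))" unfolding F_def G_def t using wx by simp
  then show ?thesis using q_in_smash[OF tassoc_mem(3)[OF aY w(1) h(1) w(2) h(4)]] by simp
qed

end

locale hopf = three +
  assumes wra: "weak_right_adjoint_hyp C"
begin

definition wbody where
  "wbody \<theta> S \<sigma> \<longleftrightarrow>
     (\<forall>x \<tau>. (\<forall>i<crd C (tgt C \<theta>). x i \<in> ob C \<and> \<tau> i \<in> hom C (fib C \<theta> i) (x i)) \<longrightarrow>
       (let \<phi>B = fst (S x \<tau>); \<psi>B = snd (S x \<tau>) in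
         \<phi>B \<in> mor C \<and> \<psi>B \<in> mor C \<and> src C \<phi>B = src C \<theta> \<and> tgt C \<phi>B = src C \<psi>B \<and>
         tgt C \<psi>B = tgt C \<theta> \<and> cmp C \<psi>B \<phi>B = \<theta> \<and>
         (\<forall>i<crd C (tgt C \<theta>).
            \<sigma> x \<tau> i \<in> hom C (fib C \<psi>B i) (x i) \<and>
            cmp C (\<sigma> x \<tau> i) (fibm C \<psi>B \<phi>B i) = \<tau> i \<and>
            fibrewise_trivial C (\<sigma> x \<tau> i)) \<and>
         (\<forall>\<phi>\<in>mor C. \<forall>\<psi>\<in>mor C. \<forall>g.
            src C \<phi> = src C \<theta> \<and> tgt C \<phi> = src C \<psi> \<and> tgt C \<psi> = tgt C \<theta> \<and>
            cmp C \<psi> \<phi> = \<theta> \<and>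
            (\<forall>i<crd C (tgt C \<theta>). g i \<in> hom C (fib C \<psi> i) (x i) \<and>
                                    cmp C (g i) (fibm C \<psi> \<phi> i) = \<tau> i) \<longrightarrow>
            (\<exists>\<kappa>\<in>hom C (src C \<psi>) (src C \<psi>B).
               cmp C \<psi>B \<kappa> = \<psi> \<and> cmp C \<kappa> \<phi> = \<phi>B \<and>
               (\<forall>i<crd C (tgt C \<theta>). cmp C (\<sigma> x \<tau> i) (fibm C \<psi>B \<kappa> i) = g i)))))"

lemma wra': "\<theta> \<in> mor C \<Longrightarrow> \<exists>p. wbody \<theta> (fst p) (snd p)"
proof -
  assume t: "\<theta> \<in> mor C"
  have "\<exists>S \<sigma>. wbody \<theta> S \<sigma>" using wra t unfolding weak_right_adjoint_hyp_def wbody_def by blast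
  then show ?thesis by auto
qed

definition SS where "SS \<theta> = (SOME p. wbody \<theta> (fst p) (snd p))"

lemma SS_spec: "\<theta> \<in> mor C \<Longrightarrow> wbody \<theta> (fst (SS \<theta>)) (snd (SS \<theta>))"
  unfolding SS_def using someI_ex[OF wra'] by blast

abbreviation vy where "vy vs i \<equiv> fst (vs i)"
abbreviation vc where "vc vs i \<equiv> fst (snd (vs i))"
abbreviation vz where "vz vs i \<equiv> snd (snd (vs i))"

definition xo where "xo \<theta> vs = (\<lambda>i. if i < nt \<theta> then dY (vy vs i) else undefined)"
definition tau where "tau \<theta> vs = (\<lambda>i. if i < nt \<theta> then vc vs i else undefined)"
definition phiB where "phiB \<theta> vs = fst (fst (SS \<theta>) (xo \<theta> vs) (tau \<theta> vs))"
definition psiB where "psiB \<theta> vs = snd (fst (SS \<theta>) (xo \<theta> vs) (tau \<theta> vs))"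
definition sig where "sig \<theta> vs = snd (SS \<theta>) (xo \<theta> vs) (tau \<theta> vs)"

definition vok where "vok x \<theta> vs \<longleftrightarrow> x \<in> X \<and> \<theta> \<in> mor C \<and> dX x = tgt C \<theta> \<and>
   (\<forall>i<nt \<theta>. vs i \<in> tens C Y dY Z dZ \<and> tdeg C (vs i) = fib C \<theta> i)"

lemma vokD:
  assumes "vok x \<theta> vs" "i < nt \<theta>"
  shows "vy vs i \<in> Y" "vc vs i \<in> mor C" "dY (vy vs i) = tgt C (vc vs i)" "ysok Z dZ (vc vs i) (vz vs i)"
    "src C (vc vs i) = fib C \<theta> i"
proof -
  have h: "vs i \<in> tens C Y dY Z dZ" "tdeg C (vs i) = fib C \<theta> i" using assms unfolding vok_def by auto
  obtain y c z where v: "vs i = (y, c, z)" by (cases "vs i") blast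
  show "vy vs i \<in> Y" "vc vs i \<in> mor C" "dY (vy vs i) = tgt C (vc vs i)" "ysok Z dZ (vc vs i) (vz vs i)"
    "src C (vc vs i) = fib C \<theta> i" using h unfolding v tens_iff by (auto simp: tdeg_simp)
qed

definition fact where "fact x \<theta> vs \<psi> \<phi> g \<longleftrightarrow> \<psi> \<in> mor C \<and> \<phi> \<in> mor C \<and> tgt C \<phi> = src C \<psi> \<and> cmp C \<psi> \<phi> = \<theta> \<and>
   (\<forall>i<nt \<theta>. g i \<in> mor C \<and> src C (g i) = fib C \<psi> i \<and> tgt C (g i) = dY (vy vs i) \<and> ft (g i) \<and>
      cmp C (g i) (fibm C \<psi> \<phi> i) = vc vs i)"

lemma fact_basic:
  assumes "fact x \<theta> vs \<psi> \<phi> g"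
  shows "\<psi> \<in> mor C" "\<phi> \<in> mor C" "tgt C \<phi> = src C \<psi>" "cmp C \<psi> \<phi> = \<theta>" "nt \<psi> = nt \<theta>"
    "src C \<phi> = src C \<theta>" "tgt C \<psi> = tgt C \<theta>"
    "\<And>i. i < nt \<theta> \<Longrightarrow> g i \<in> mor C \<and> src C (g i) = fib C \<psi> i \<and> tgt C (g i) = dY (vy vs i) \<and> ft (g i) \<and>
      cmp C (g i) (fibm C \<psi> \<phi> i) = vc vs i"
proof -
  have h: "\<psi> \<in> mor C" "\<phi> \<in> mor C" "tgt C \<phi> = src C \<psi>" "cmp C \<psi> \<phi> = \<theta>" using assms unfolding fact_def by auto
  show "\<psi> \<in> mor C" "\<phi> \<in> mor C" "tgt C \<phi> = src C \<psi>" "cmp C \<psi> \<phi> = \<theta>" using h by auto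
  show "tgt C \<psi> = tgt C \<theta>" using cmp_tgt[OF h(2,1,3)] h(4) by simp
  then show "nt \<psi> = nt \<theta>" by simp
  show "src C \<phi> = src C \<theta>" using cmp_src[OF h(2,1,3)] h(4) by simp
  show "\<And>i. i < nt \<theta> \<Longrightarrow> g i \<in> mor C \<and> src C (g i) = fib C \<psi> i \<and> tgt C (g i) = dY (vy vs i) \<and> ft (g i) \<and>
      cmp C (g i) (fibm C \<psi> \<phi> i) = vc vs i" using assms unfolding fact_def by auto
qed

lemma S_all:
  assumes "vok x \<theta> vs"
  shows "fact x \<theta> vs (psiB \<theta> vs) (phiB \<theta> vs) (sig \<theta> vs)"
    "\<And>\<psi> \<phi> g. fact x \<theta> vs \<psi> \<phi> g \<Longrightarrow> \<exists>\<kappa>. \<kappa> \<in> mor C \<and> src C \<kappa> = src C \<psi> \<and> tgt C \<kappa> = src C (psiB \<theta> vs) \<and>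
        cmp C (psiB \<theta> vs) \<kappa> = \<psi> \<and> cmp C \<kappa> \<phi> = phiB \<theta> vs \<and>
        (\<forall>i<nt \<theta>. cmp C (sig \<theta> vs i) (fibm C (psiB \<theta> vs) \<kappa> i) = g i)"
proof -
  have t: "\<theta> \<in> mor C" using assms unfolding vok_def by simp
  have pre: "\<And>i. i < crd C (tgt C \<theta>) \<Longrightarrow> xo \<theta> vs i \<in> ob C \<and> tau \<theta> vs i \<in> hom C (fib C \<theta> i) (xo \<theta> vs i)"
  proof -
    fix i assume i: "i < nt \<theta>"
    note v = vokD[OF assms i]
    show "xo \<theta> vs i \<in> ob C \<and> tau \<theta> vs i \<in> hom C (fib C \<theta> i) (xo \<theta> vs i)"
      unfolding xo_def tau_def hom_def using i v tgt_ob[OF v(2)] by simp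
  qed
  note W = SS_spec[OF t, unfolded wbody_def, rule_format, of "xo \<theta> vs" "tau \<theta> vs", OF pre]
  have W': "phiB \<theta> vs \<in> mor C \<and> psiB \<theta> vs \<in> mor C \<and> src C (phiB \<theta> vs) = src C \<theta> \<and>
         tgt C (phiB \<theta> vs) = src C (psiB \<theta> vs) \<and>
         tgt C (psiB \<theta> vs) = tgt C \<theta> \<and> cmp C (psiB \<theta> vs) (phiB \<theta> vs) = \<theta> \<and>
         (\<forall>i<crd C (tgt C \<theta>).
            sig \<theta> vs i \<in> hom C (fib C (psiB \<theta> vs) i) (xo \<theta> vs i) \<and>
            cmp C (sig \<theta> vs i) (fibm C (psiB \<theta> vs) (phiB \<theta> vs) i) = tau \<theta> vs i \<and>
            ft (sig \<theta> vs i)) \<and>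
         (\<forall>\<phi>\<in>mor C. \<forall>\<psi>\<in>mor C. \<forall>g.
            src C \<phi> = src C \<theta> \<and> tgt C \<phi> = src C \<psi> \<and> tgt C \<psi> = tgt C \<theta> \<and>
            cmp C \<psi> \<phi> = \<theta> \<and>
            (\<forall>i<crd C (tgt C \<theta>). g i \<in> hom C (fib C \<psi> i) (xo \<theta> vs i) \<and>
                                    cmp C (g i) (fibm C \<psi> \<phi> i) = tau \<theta> vs i) \<longrightarrow>
            (\<exists>\<kappa>\<in>hom C (src C \<psi>) (src C (psiB \<theta> vs)).
               cmp C (psiB \<theta> vs) \<kappa> = \<psi> \<and> cmp C \<kappa> \<phi> = phiB \<theta> vs \<and>
               (\<forall>i<crd C (tgt C \<theta>). cmp C (sig \<theta> vs i) (fibm C (psiB \<theta> vs) \<kappa> i) = g i)))"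
    using W unfolding phiB_def psiB_def sig_def Let_def .
  show "fact x \<theta> vs (psiB \<theta> vs) (phiB \<theta> vs) (sig \<theta> vs)"
    unfolding fact_def using W' unfolding hom_def xo_def tau_def by auto
  show "\<And>\<psi> \<phi> g. fact x \<theta> vs \<psi> \<phi> g \<Longrightarrow> \<exists>\<kappa>. \<kappa> \<in> mor C \<and> src C \<kappa> = src C \<psi> \<and> tgt C \<kappa> = src C (psiB \<theta> vs) \<and>
        cmp C (psiB \<theta> vs) \<kappa> = \<psi> \<and> cmp C \<kappa> \<phi> = phiB \<theta> vs \<and>
        (\<forall>i<nt \<theta>. cmp C (sig \<theta> vs i) (fibm C (psiB \<theta> vs) \<kappa> i) = g i)"
  proof -
    fix \<psi> \<phi> g assume f: "fact x \<theta> vs \<psi> \<phi> g"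
    note fb = fact_basic[OF f]
    have g: "\<forall>i<crd C (tgt C \<theta>). g i \<in> hom C (fib C \<psi> i) (xo \<theta> vs i) \<and> cmp C (g i) (fibm C \<psi> \<phi> i) = tau \<theta> vs i"
      using fb(8) unfolding hom_def xo_def tau_def by auto
    have univ: "\<forall>\<phi>\<in>mor C. \<forall>\<psi>\<in>mor C. \<forall>g.
            src C \<phi> = src C \<theta> \<and> tgt C \<phi> = src C \<psi> \<and> tgt C \<psi> = tgt C \<theta> \<and>
            cmp C \<psi> \<phi> = \<theta> \<and>
            (\<forall>i<crd C (tgt C \<theta>). g i \<in> hom C (fib C \<psi> i) (xo \<theta> vs i) \<and>
                                    cmp C (g i) (fibm C \<psi> \<phi> i) = tau \<theta> vs i) \<longrightarrow>
            (\<exists>\<kappa>\<in>hom C (src C \<psi>) (src C (psiB \<theta> vs)).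
               cmp C (psiB \<theta> vs) \<kappa> = \<psi> \<and> cmp C \<kappa> \<phi> = phiB \<theta> vs \<and>
               (\<forall>i<crd C (tgt C \<theta>). cmp C (sig \<theta> vs i) (fibm C (psiB \<theta> vs) \<kappa> i) = g i))"
      using W' by blast
    have pr: "src C \<phi> = src C \<theta> \<and> tgt C \<phi> = src C \<psi> \<and> tgt C \<psi> = tgt C \<theta> \<and>
            cmp C \<psi> \<phi> = \<theta> \<and>
            (\<forall>i<crd C (tgt C \<theta>). g i \<in> hom C (fib C \<psi> i) (xo \<theta> vs i) \<and>
                                    cmp C (g i) (fibm C \<psi> \<phi> i) = tau \<theta> vs i)"
      using fb(3,4,6,7) g by blast
    have ex: "\<exists>\<kappa>\<in>hom C (src C \<psi>) (src C (psiB \<theta> vs)).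
               cmp C (psiB \<theta> vs) \<kappa> = \<psi> \<and> cmp C \<kappa> \<phi> = phiB \<theta> vs \<and>
               (\<forall>i<crd C (tgt C \<theta>). cmp C (sig \<theta> vs i) (fibm C (psiB \<theta> vs) \<kappa> i) = g i)"
      using univ fb(1,2) pr by blast
    obtain \<kappa> where k: "\<kappa> \<in> hom C (src C \<psi>) (src C (psiB \<theta> vs))" "cmp C (psiB \<theta> vs) \<kappa> = \<psi>"
      "cmp C \<kappa> \<phi> = phiB \<theta> vs" "\<forall>i<crd C (tgt C \<theta>). cmp C (sig \<theta> vs i) (fibm C (psiB \<theta> vs) \<kappa> i) = g i"
      using ex by blast
    then show "\<exists>\<kappa>. \<kappa> \<in> mor C \<and> src C \<kappa> = src C \<psi> \<and> tgt C \<kappa> = src C (psiB \<theta> vs) \<and>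
        cmp C (psiB \<theta> vs) \<kappa> = \<psi> \<and> cmp C \<kappa> \<phi> = phiB \<theta> vs \<and>
        (\<forall>i<nt \<theta>. cmp C (sig \<theta> vs i) (fibm C (psiB \<theta> vs) \<kappa> i) = g i)"
      unfolding hom_def by blast
  qed
qed

end

context hopf begin

definition YG where "YG vs \<psi> g = (\<lambda>i. if i < nt \<psi> then ract rY (vy vs i) (g i) else undefined)"
definition ZG where "ZG vs \<psi> g \<phi> = (\<lambda>j. if j < nt \<phi> then
    vz vs (crdm C \<psi> j) (crdm C (g (crdm C \<psi> j)) (rk \<psi> (crdm C \<psi> j) j)) else undefined)"
definition Ptrip where "Ptrip x vs \<psi> \<phi> g = (qXY (x, \<psi>, YG vs \<psi> g), \<phi>, ZG vs \<psi> g \<phi>)"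

lemma Ptrip_mem:
  assumes v: "vok x \<theta> vs" and f: "fact x \<theta> vs \<psi> \<phi> g"
  shows "(x, \<psi>, YG vs \<psi> g) \<in> tens C X dX Y dY" "ysok Z dZ \<phi> (ZG vs \<psi> g \<phi>)"
    "Ptrip x vs \<psi> \<phi> g \<in> T1"
proof -
  note fb = fact_basic[OF f]
  have xx: "x \<in> X" "dX x = tgt C \<theta>" using v unfolding vok_def by auto
  have yok: "ysok Y dY \<psi> (YG vs \<psi> g)" unfolding ysok_def
  proof (intro conjI allI impI)
    fix i
    { assume i: "i < nt \<psi>"
      then have i': "i < nt \<theta>" using fb(5) by simp
      note gi = fb(8)[OF i']
      note vi = vokD[OF v i']
      have r: "ract rY (vy vs i) (g i) \<in> Y \<and> dY (ract rY (vy vs i) (g i)) = src C (g i)"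
        using actokD[OF aY vi(1)] gi by simp
      show "YG vs \<psi> g i \<in> Y" "dY (YG vs \<psi> g i) = fib C \<psi> i" using r gi i unfolding YG_def by auto }
    { assume "nt \<psi> \<le> i" then show "YG vs \<psi> g i = undefined" unfolding YG_def by simp }
  qed
  show w: "(x, \<psi>, YG vs \<psi> g) \<in> tens C X dX Y dY" unfolding tens_iff using xx fb yok by simp
  show zok: "ysok Z dZ \<phi> (ZG vs \<psi> g \<phi>)" unfolding ysok_def
  proof (intro conjI allI impI)
    fix j
    { assume j: "j < nt \<phi>"
      have j': "j < ns \<psi>" using j fb(3) by simp
      let ?i = "crdm C \<psi> j"
      have i: "?i < nt \<psi>" using crdm_lt[OF fb(1) j'] .
      have i': "?i < nt \<theta>" using i fb(5) by simp
      note gi = fb(8)[OF i']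
      note vi = vokD[OF v i']
      let ?m = "rk \<psi> ?i j"
      have m: "?m < ns (g ?i)" using rk_props(1)[OF fb(1) j'] gi by simp
      let ?a = "crdm C (g ?i) ?m"
      have a: "?a < nt (g ?i)" using crdm_lt[OF _ m] gi by simp
      have a': "?a < nt (vc vs ?i)" using a gi vi(3) by simp
      have za: "vz vs ?i ?a \<in> Z" "dZ (vz vs ?i ?a) = fib C (vc vs ?i) ?a"
        using vi(4) a' unfolding ysok_def by auto
      have fm: "fibm C \<psi> \<phi> ?i \<in> mor C" "tgt C (fibm C \<psi> \<phi> ?i) = src C (g ?i)"
        using fibm_mor[OF fb(1,2,3) i] fibm_tgt[OF fb(1,2,3) i] gi by auto
      have tr: "triv (fib C (g ?i) ?a)" using gi a unfolding ft_def' by simp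
      have T4: "fib C (fibm C \<psi> \<phi> ?i) (en (g ?i) ?a 0) = fib C (cmp C (g ?i) (fibm C \<psi> \<phi> ?i)) ?a"
        using TT(4)[OF _ fm(1) fm(2) a tr] gi by simp
      have e: "en (g ?i) ?a 0 = ?m" using FTU(2)[OF _ _ m] gi by simp
      have mk: "?m < crd C (fib C \<psi> ?i)" using rk_props(1)[OF fb(1) j'] .
      have "fib C (vc vs ?i) ?a = fib C (fibm C \<psi> \<phi> ?i) ?m" using T4 e gi by simp
      also have "\<dots> = fib C \<phi> (en \<psi> ?i ?m)" using ds1[OF fb(1,2,3) i mk] by simp
      also have "\<dots> = fib C \<phi> j" using rk_props(2)[OF fb(1) j'] by simp
      finally have "fib C (vc vs ?i) ?a = fib C \<phi> j" .
      then show "ZG vs \<psi> g \<phi> j \<in> Z" "dZ (ZG vs \<psi> g \<phi> j) = fib C \<phi> j"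
        using za j unfolding ZG_def by auto }
    { assume "nt \<phi> \<le> j" then show "ZG vs \<psi> g \<phi> j = undefined" unfolding ZG_def by simp }
  qed
  have d: "smash_deg C (qXY (x, \<psi>, YG vs \<psi> g)) = tgt C \<phi>" using deg_q[OF aX w] fb(3) by (simp add: tdeg_simp)
  show "Ptrip x vs \<psi> \<phi> g \<in> T1" unfolding Ptrip_def tens_iff using q_in_smash[OF w] d zok fb(2) by simp
qed

definition Phi where "Phi x vs \<psi> \<phi> g = q1 (Ptrip x vs \<psi> \<phi> g)"

lemma K:
  assumes v: "vok x \<theta> vs" and f: "fact x \<theta> vs \<psi> \<phi> g"
  shows "Phi x vs (psiB \<theta> vs) (phiB \<theta> vs) (sig \<theta> vs) = Phi x vs \<psi> \<phi> g"
proof -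
  let ?\<psi>B = "psiB \<theta> vs" and ?\<phi>B = "phiB \<theta> vs" and ?\<sigma> = "sig \<theta> vs"
  note fB = S_all(1)[OF v]
  note fb = fact_basic[OF f]
  note fbB = fact_basic[OF fB]
  obtain \<kappa> where k: "\<kappa> \<in> mor C" "src C \<kappa> = src C \<psi>" "tgt C \<kappa> = src C ?\<psi>B" "cmp C ?\<psi>B \<kappa> = \<psi>"
    "cmp C \<kappa> \<phi> = ?\<phi>B" "\<And>i. i < nt \<theta> \<Longrightarrow> cmp C (?\<sigma> i) (fibm C ?\<psi>B \<kappa> i) = g i"
    using S_all(2)[OF v f] by blast
  have fmk: "\<And>i. i < nt \<theta> \<Longrightarrow> fibm C ?\<psi>B \<kappa> i \<in> mor C \<and> tgt C (fibm C ?\<psi>B \<kappa> i) = src C (?\<sigma> i)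
      \<and> ft (fibm C ?\<psi>B \<kappa> i)"
  proof -
    fix i assume i: "i < nt \<theta>"
    have iB: "i < nt ?\<psi>B" using i fbB(5) by simp
    have m: "fibm C ?\<psi>B \<kappa> i \<in> mor C" "tgt C (fibm C ?\<psi>B \<kappa> i) = src C (?\<sigma> i)"
      using fibm_mor[OF fbB(1) k(1,3) iB] fibm_tgt[OF fbB(1) k(1,3) iB] fbB(8)[OF i] by auto
    have "ft (fibm C ?\<psi>B \<kappa> i)"
      using ft_cancel[of "?\<sigma> i" "fibm C ?\<psi>B \<kappa> i"] fbB(8)[OF i] m k(6)[OF i] fb(8)[OF i] by simp
    then show "fibm C ?\<psi>B \<kappa> i \<in> mor C \<and> tgt C (fibm C ?\<psi>B \<kappa> i) = src C (?\<sigma> i) \<and> ft (fibm C ?\<psi>B \<kappa> i)"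
      using m by simp
  qed
  have ftk: "ft \<kappa>"
    by (rule ft_from_fibm[OF fbB(1) k(1,3)]) (use fmk fbB(5) in simp)
  let ?wB = "(x, ?\<psi>B, YG vs ?\<psi>B ?\<sigma>)"
  have wB: "?wB \<in> tens C X dX Y dY" using Ptrip_mem(1)[OF v fB] .
  let ?QB = "qXY ?wB"
  have QB: "?QB \<in> P" "smash_deg C ?QB = tgt C \<kappa>" using q_in_smash[OF wB] deg_q[OF aX wB] k(3)
    by (auto simp: tdeg_simp)
  have act: "ract rP ?QB \<kappa> = qXY (actT rY ?wB \<kappa>)"
    unfolding ract_def using L_act[OF aX aY wB k(1) ftk] k(3) by (simp add: tdeg_simp)
  have yeq: "(\<lambda>i. if i < nt ?\<psi>B then ract rY (YG vs ?\<psi>B ?\<sigma> i) (fibm C ?\<psi>B \<kappa> i) else undefined) = YG vs \<psi> g"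
  proof
    fix i show "(if i < nt ?\<psi>B then ract rY (YG vs ?\<psi>B ?\<sigma> i) (fibm C ?\<psi>B \<kappa> i) else undefined) = YG vs \<psi> g i"
    proof (cases "i < nt \<theta>")
      case True
      note vi = vokD[OF v True]
      note si = fbB(8)[OF True]
      have "ract rY (ract rY (vy vs i) (?\<sigma> i)) (fibm C ?\<psi>B \<kappa> i) = ract rY (vy vs i) (cmp C (?\<sigma> i) (fibm C ?\<psi>B \<kappa> i))"
        using M2[OF mY vi(1)] si fmk[OF True] by simp
      then show ?thesis using True fbB(5) fb(5) k(6)[OF True] unfolding YG_def by simp
    next
      case False then show ?thesis using fbB(5) fb(5) unfolding YG_def by simp
    qed
  qed
  have aT: "actT rY ?wB \<kappa> = (x, \<psi>, YG vs \<psi> g)" unfolding actT_simp k(4) yeq ..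
  have zok: "ysok Z dZ \<phi> (ZG vs \<psi> g \<phi>)" using Ptrip_mem(2)[OF v f] .
  have tk: "tgt C \<phi> = src C \<kappa>" using k(2) fb(3) by simp
  have gen: "((ract rP ?QB \<kappa>, \<phi>, ZG vs \<psi> g \<phi>), (?QB, cmp C \<kappa> \<phi>, pull \<kappa> (ZG vs \<psi> g \<phi>)))
      \<in> smash_gen C P (smash_deg C) rP Z dZ"
    unfolding gen_iff using QB k(1) ftk fb(2) tk zok by blast
  have zeq: "pull \<kappa> (ZG vs \<psi> g \<phi>) = ZG vs ?\<psi>B ?\<sigma> ?\<phi>B"
  proof
    fix j
    have ntk: "nt \<kappa> = nt ?\<phi>B" using k(3) fbB(3) by simp
    show "pull \<kappa> (ZG vs \<psi> g \<phi>) j = ZG vs ?\<psi>B ?\<sigma> ?\<phi>B j"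
    proof (cases "j < nt \<kappa>")
      case True
      obtain l where l: "l = en \<kappa> j 0" by blast
      have lp: "l < ns \<kappa>" "crdm C \<kappa> l = j" using FTU(1)[OF k(1) ftk True] l by auto
      have lphi: "l < nt \<phi>" using lp(1) k(2) fb(3) by simp
      have lpsi: "l < ns \<psi>" using lp(1) k(2) by simp
      have jB: "j < ns ?\<psi>B" using True k(3) by simp
      obtain i where i: "i = crdm C ?\<psi>B j" by blast
      have ipsi: "crdm C \<psi> l = i" using crdm_cmp[OF k(1) fbB(1) k(3) lp(1)] k(4) lp(2) i by simp
      have iB: "i < nt ?\<psi>B" using crdm_lt[OF fbB(1) jB] i by simp
      have it: "i < nt \<theta>" using iB fbB(5) by simp
      obtain m where m: "m = rk \<psi> i l" by blast
      have mlt: "m < crd C (fib C \<psi> i)" using rk_props(1)[OF fb(1) lpsi] ipsi m by simp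
      have mlt': "m < crd C (fib C (cmp C ?\<psi>B \<kappa>) i)" using mlt k(4) by simp
      have ens: "en (cmp C ?\<psi>B \<kappa>) i m = l" using rk_props(2)[OF fb(1) lpsi] ipsi m k(4) by simp
      have cf: "crdm C (fibm C ?\<psi>B \<kappa> i) m = rk ?\<psi>B i j"
        using crdm_fibm[OF fbB(1) k(1,3) iB mlt'] ens lp(2) by simp
      have ns_f: "m < ns (fibm C ?\<psi>B \<kappa> i)" using mlt' fibm_src[OF fbB(1) k(1,3) iB] by simp
      have cg: "crdm C (g i) m = crdm C (?\<sigma> i) (rk ?\<psi>B i j)"
        using crdm_cmp[of "fibm C ?\<psi>B \<kappa> i" "?\<sigma> i" m] fmk[OF it] fbB(8)[OF it] ns_f cf k(6)[OF it] by simp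
      have "pull \<kappa> (ZG vs \<psi> g \<phi>) j = ZG vs \<psi> g \<phi> l" using True l unfolding pull_def by simp
      also have "\<dots> = vz vs i (crdm C (g i) m)" using lphi ipsi m unfolding ZG_def by simp
      also have "\<dots> = ZG vs ?\<psi>B ?\<sigma> ?\<phi>B j" using cg True ntk i unfolding ZG_def by simp
      finally show ?thesis .
    next
      case False then show ?thesis using ntk unfolding pull_def ZG_def by simp
    qed
  qed
  have "Phi x vs \<psi> \<phi> g = q1 (ract rP ?QB \<kappa>, \<phi>, ZG vs \<psi> g \<phi>)"
    unfolding Phi_def Ptrip_def act aT ..
  also have "\<dots> = q1 (?QB, cmp C \<kappa> \<phi>, pull \<kappa> (ZG vs \<psi> g \<phi>))" using q_gen[OF gen] .
  also have "\<dots> = Phi x vs ?\<psi>B ?\<phi>B ?\<sigma>" unfolding Phi_def Ptrip_def k(5) zeq ..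
  finally show ?thesis by simp
qed

end

lemma pw_closure:
  fixes n :: nat
  assumes fg: "\<forall>i<n. (f i, g i) \<in> R\<^sup>*"
    and st: "\<And>h i b. (\<forall>j<n. (f j, h j) \<in> R\<^sup>*) \<Longrightarrow> i < n \<Longrightarrow> (h i, b) \<in> R \<Longrightarrow> \<Phi> h = \<Phi> (h(i := b))"
  shows "\<Phi> f = \<Phi> (\<lambda>i. if i < n then g i else f i)"
proof -
  have "\<forall>k. k \<le> n \<longrightarrow> \<Phi> f = \<Phi> (\<lambda>i. if i < k then g i else f i)"
  proof (intro allI)
    fix k show "k \<le> n \<longrightarrow> \<Phi> f = \<Phi> (\<lambda>i. if i < k then g i else f i)"
    proof (induction k)
      case 0 then show ?case by simp
    next
      case (Suc k)
      show ?case
      proof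
        assume kn: "Suc k \<le> n"
        let ?h0 = "\<lambda>i. if i < k then g i else f i"
        have ih: "\<Phi> f = \<Phi> ?h0" using Suc.IH kn by simp
        have path: "(f k, g k) \<in> R\<^sup>*" using fg kn by simp
        have "\<And>c. (f k, c) \<in> R\<^sup>* \<Longrightarrow> \<Phi> ?h0 = \<Phi> (?h0(k := c))"
        proof -
          fix c assume "(f k, c) \<in> R\<^sup>*"
          then show "\<Phi> ?h0 = \<Phi> (?h0(k := c))"
          proof (induction rule: rtrancl_induct)
            case base
            have "?h0(k := f k) = ?h0" by (intro ext) simp
            then show ?case by simp
          next
            case (step c d)
            have pre: "\<forall>j<n. (f j, (?h0(k := c)) j) \<in> R\<^sup>*"
              using fg step(1) by auto
            have e1: "\<Phi> (?h0(k := c)) = \<Phi> ((?h0(k := c))(k := d))"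
              by (rule st[OF pre]) (use kn step(2) in auto)
            have e2: "(?h0(k := c))(k := d) = ?h0(k := d)" by (rule fun_upd_upd)
            show ?case using step(3) e1 e2 by metis
          qed
        qed
        then have "\<Phi> ?h0 = \<Phi> (?h0(k := g k))" using path by blast
        moreover have "?h0(k := g k) = (\<lambda>i. if i < Suc k then g i else f i)" by (intro ext) auto
        ultimately show "\<Phi> f = \<Phi> (\<lambda>i. if i < Suc k then g i else f i)" using ih by simp
      qed
    qed
  qed
  then show ?thesis by simp
qed

context hopf begin

definition Hraw where "Hraw x \<theta> vs = Phi x vs (psiB \<theta> vs) (phiB \<theta> vs) (sig \<theta> vs)"
definition H where "H u = (case u of (x, \<theta>, ws) \<Rightarrow> Hraw x \<theta> (\<lambda>i. SOME v. v \<in> ws i))"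

lemma Hraw_cong:
  assumes v: "vok x \<theta> vs" and eq: "\<And>i. i < nt \<theta> \<Longrightarrow> vs i = vs' i"
  shows "Hraw x \<theta> vs = Hraw x \<theta> vs'"
proof -
  have xo: "xo \<theta> vs = xo \<theta> vs'" unfolding xo_def using eq by (intro ext) simp
  have ta: "tau \<theta> vs = tau \<theta> vs'" unfolding tau_def using eq by (intro ext) simp
  have s: "psiB \<theta> vs = psiB \<theta> vs'" "phiB \<theta> vs = phiB \<theta> vs'" "sig \<theta> vs = sig \<theta> vs'"
    unfolding psiB_def phiB_def sig_def xo ta by auto
  note fb = fact_basic[OF S_all(1)[OF v]]
  have yg: "YG vs (psiB \<theta> vs) (sig \<theta> vs) = YG vs' (psiB \<theta> vs) (sig \<theta> vs)"
    unfolding YG_def using eq fb(5) by (intro ext) simp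
  have zg: "ZG vs (psiB \<theta> vs) (sig \<theta> vs) (phiB \<theta> vs) = ZG vs' (psiB \<theta> vs) (sig \<theta> vs) (phiB \<theta> vs)"
  proof
    fix j show "ZG vs (psiB \<theta> vs) (sig \<theta> vs) (phiB \<theta> vs) j = ZG vs' (psiB \<theta> vs) (sig \<theta> vs) (phiB \<theta> vs) j"
    proof (cases "j < nt (phiB \<theta> vs)")
      case True
      have "crdm C (psiB \<theta> vs) j < nt \<theta>" using crdm_lt[OF fb(1), of j] True fb(3,5) by simp
      then show ?thesis unfolding ZG_def using eq by simp
    next
      case False then show ?thesis unfolding ZG_def by simp
    qed
  qed
  show ?thesis unfolding Hraw_def Phi_def Ptrip_def s[symmetric] yg zg ..
qed

definition rrel where "rrel \<rho> v v' \<longleftrightarrow> (\<exists>y \<phi>' z. v = (y, cmp C \<rho> \<phi>', pull \<rho> z) \<and> v' = (ract rY y \<rho>, \<phi>', z) \<and>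
   y \<in> Y \<and> \<rho> \<in> mor C \<and> dY y = tgt C \<rho> \<and> ft \<rho> \<and> \<phi>' \<in> mor C \<and> tgt C \<phi>' = src C \<rho> \<and> ysok Z dZ \<phi>' z)"

lemma H_gen:
  assumes v: "vok x \<theta> vs" and v': "vok x \<theta> vs'" and r: "\<And>i. i < nt \<theta> \<Longrightarrow> \<exists>\<rho>. rrel \<rho> (vs i) (vs' i)"
  shows "Hraw x \<theta> vs = Hraw x \<theta> vs'"
proof -
  have "\<forall>i. \<exists>\<rho>. i < nt \<theta> \<longrightarrow> rrel \<rho> (vs i) (vs' i)" using r by blast
  then obtain \<rho> where \<rho>: "\<And>i. i < nt \<theta> \<Longrightarrow> rrel (\<rho> i) (vs i) (vs' i)" by metis
  let ?\<psi> = "psiB \<theta> vs'" and ?\<phi> = "phiB \<theta> vs'" and ?\<sigma> = "sig \<theta> vs'"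
  note fB = S_all(1)[OF v']
  note fb = fact_basic[OF fB]
  let ?g = "\<lambda>i. cmp C (\<rho> i) (?\<sigma> i)"
  have data: "\<And>i. i < nt \<theta> \<Longrightarrow> \<exists>y \<phi>' z. vs i = (y, cmp C (\<rho> i) \<phi>', pull (\<rho> i) z) \<and> vs' i = (ract rY y (\<rho> i), \<phi>', z) \<and>
   y \<in> Y \<and> \<rho> i \<in> mor C \<and> dY y = tgt C (\<rho> i) \<and> ft (\<rho> i) \<and> \<phi>' \<in> mor C \<and> tgt C \<phi>' = src C (\<rho> i) \<and> ysok Z dZ \<phi>' z"
    using \<rho> unfolding rrel_def by blast
  have gi: "\<And>i. i < nt \<theta> \<Longrightarrow> ?g i \<in> mor C \<and> src C (?g i) = fib C ?\<psi> i \<and> tgt C (?g i) = dY (vy vs i) \<and> ft (?g i) \<and>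
      cmp C (?g i) (fibm C ?\<psi> ?\<phi> i) = vc vs i \<and> tgt C (?\<sigma> i) = src C (\<rho> i)"
  proof -
    fix i assume i: "i < nt \<theta>"
    obtain y \<phi>' z where d: "vs i = (y, cmp C (\<rho> i) \<phi>', pull (\<rho> i) z)" "vs' i = (ract rY y (\<rho> i), \<phi>', z)"
      "y \<in> Y" "\<rho> i \<in> mor C" "dY y = tgt C (\<rho> i)" "ft (\<rho> i)" "\<phi>' \<in> mor C" "tgt C \<phi>' = src C (\<rho> i)" "ysok Z dZ \<phi>' z"
      using data[OF i] by blast
    note s = fb(8)[OF i]
    have dr: "dY (ract rY y (\<rho> i)) = src C (\<rho> i)" using actokD[OF aY d(3,4,5,6)] by simp
    have ts: "tgt C (?\<sigma> i) = src C (\<rho> i)" using s d(2) dr by simp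
    have fm: "fibm C ?\<psi> ?\<phi> i \<in> mor C" "tgt C (fibm C ?\<psi> ?\<phi> i) = src C (?\<sigma> i)"
      using fibm_mor[OF fb(1,2,3)] fibm_tgt[OF fb(1,2,3)] i fb(5) s by auto
    have "cmp C (?g i) (fibm C ?\<psi> ?\<phi> i) = cmp C (\<rho> i) (cmp C (?\<sigma> i) (fibm C ?\<psi> ?\<phi> i))"
      using cmp_assoc[OF fm(1) _ d(4) fm(2) ts] s by simp
    also have "\<dots> = cmp C (\<rho> i) \<phi>'" using s d(2) by simp
    also have "\<dots> = vc vs i" using d(1) by simp
    finally show "?g i \<in> mor C \<and> src C (?g i) = fib C ?\<psi> i \<and> tgt C (?g i) = dY (vy vs i) \<and> ft (?g i) \<and>
      cmp C (?g i) (fibm C ?\<psi> ?\<phi> i) = vc vs i \<and> tgt C (?\<sigma> i) = src C (\<rho> i)"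
      using cmp_mor[OF _ d(4) ts] cmp_src[OF _ d(4) ts] cmp_tgt[OF _ d(4) ts] ft_cmp[OF d(4) _ ts d(6)] s d ts
      by simp
  qed
  have f: "fact x \<theta> vs ?\<psi> ?\<phi> ?g" unfolding fact_def using fb(1-4) gi by blast
  have "Hraw x \<theta> vs = Phi x vs ?\<psi> ?\<phi> ?g" unfolding Hraw_def using K[OF v f] .
  also have "\<dots> = Phi x vs' ?\<psi> ?\<phi> ?\<sigma>"
  proof -
    have yg: "YG vs ?\<psi> ?g = YG vs' ?\<psi> ?\<sigma>"
    proof
      fix i show "YG vs ?\<psi> ?g i = YG vs' ?\<psi> ?\<sigma> i"
      proof (cases "i < nt \<theta>")
        case True
        obtain y \<phi>' z where d: "vs i = (y, cmp C (\<rho> i) \<phi>', pull (\<rho> i) z)" "vs' i = (ract rY y (\<rho> i), \<phi>', z)"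
          "y \<in> Y" "\<rho> i \<in> mor C" "dY y = tgt C (\<rho> i)" "ft (\<rho> i)" "\<phi>' \<in> mor C" "tgt C \<phi>' = src C (\<rho> i)" "ysok Z dZ \<phi>' z"
          using data[OF True] by blast
        note s = fb(8)[OF True]
        have "ract rY (ract rY y (\<rho> i)) (?\<sigma> i) = ract rY y (cmp C (\<rho> i) (?\<sigma> i))"
          using M2[OF mY d(3,5,4,6)] s gi[OF True] by simp
        then show ?thesis unfolding YG_def using True fb(5) d(1,2) by simp
      next
        case False then show ?thesis unfolding YG_def using fb(5) by simp
      qed
    qed
    have zg: "ZG vs ?\<psi> ?g ?\<phi> = ZG vs' ?\<psi> ?\<sigma> ?\<phi>"
    proof
      fix j show "ZG vs ?\<psi> ?g ?\<phi> j = ZG vs' ?\<psi> ?\<sigma> ?\<phi> j"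
      proof (cases "j < nt ?\<phi>")
        case True
        have j': "j < ns ?\<psi>" using True fb(3) by simp
        obtain i where i: "i = crdm C ?\<psi> j" by blast
        have it: "i < nt \<theta>" using crdm_lt[OF fb(1) j'] fb(5) i by simp
        obtain y \<phi>' z where d: "vs i = (y, cmp C (\<rho> i) \<phi>', pull (\<rho> i) z)" "vs' i = (ract rY y (\<rho> i), \<phi>', z)"
          "y \<in> Y" "\<rho> i \<in> mor C" "dY y = tgt C (\<rho> i)" "ft (\<rho> i)" "\<phi>' \<in> mor C" "tgt C \<phi>' = src C (\<rho> i)" "ysok Z dZ \<phi>' z"
          using data[OF it] by blast
        note s = fb(8)[OF it]
        obtain m where m: "m = rk ?\<psi> i j" by blast
        have ml: "m < ns (?\<sigma> i)" using rk_props(1)[OF fb(1) j'] i m s by simp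
        have a: "crdm C (?\<sigma> i) m < ns (\<rho> i)" using crdm_lt[OF _ ml] s gi[OF it] by simp
        have cg: "crdm C (?g i) m = crdm C (\<rho> i) (crdm C (?\<sigma> i) m)"
          using crdm_cmp[OF _ d(4) _ ml] s gi[OF it] by simp
        have ra: "crdm C (\<rho> i) (crdm C (?\<sigma> i) m) < nt (\<rho> i)" using crdm_lt[OF d(4) a] .
        have "pull (\<rho> i) z (crdm C (\<rho> i) (crdm C (?\<sigma> i) m)) = z (crdm C (?\<sigma> i) m)"
          unfolding pull_def using ra FTU(2)[OF d(4,6) a] by simp
        then show ?thesis unfolding ZG_def using True i m cg d(1,2) by simp
      next
        case False then show ?thesis unfolding ZG_def by simp
      qed
    qed
    show ?thesis unfolding Phi_def Ptrip_def yg zg ..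
  qed
  also have "\<dots> = Hraw x \<theta> vs'" unfolding Hraw_def ..
  finally show ?thesis .
qed

lemma pull_ide:
  assumes "c \<in> ob C" "ysok Z dZ \<phi> z" "tgt C \<phi> = c"
  shows "pull (ide C c) z = z"
proof
  fix k show "pull (ide C c) z k = z k"
  proof (cases "k < crd C c")
    case True
    have k: "k < ns (ide C c)" using True ide_src[OF assms(1)] by simp
    have "en (ide C c) (crdm C (ide C c) k) 0 = k" using FTU(2)[OF ide_mor[OF assms(1)] ft_ide[OF assms(1)] k] .
    then show ?thesis unfolding pull_def using True ide_tgt[OF assms(1)] crdm_ide[OF assms(1) True] by simp
  next
    case False then show ?thesis unfolding pull_def using ide_tgt[OF assms(1)] assms(2,3) unfolding ysok_def by simp
  qed
qed

lemma rrel_refl: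
  assumes "v \<in> tens C Y dY Z dZ"
  shows "rrel (ide C (tgt C (fst (snd v)))) v v"
proof -
  obtain y \<chi> z where vv: "v = (y, \<chi>, z)" by (cases v) blast
  have h: "\<chi> \<in> mor C" "y \<in> Y" "dY y = tgt C \<chi>" "ysok Z dZ \<chi> z" using assms unfolding vv tens_iff by auto
  let ?c = "tgt C \<chi>"
  have c: "?c \<in> ob C" using tgt_ob[OF h(1)] .
  have e1: "cmp C (ide C ?c) \<chi> = \<chi>" using cmp_ide_l[OF h(1)] .
  have e2: "pull (ide C ?c) z = z" using pull_ide[OF c h(4)] by simp
  have e3: "ract rY y (ide C ?c) = y" using M3[OF mY h(2)] h(3) by simp
  show ?thesis unfolding rrel_def vv
    using e1 e2 e3 h ide_mor[OF c] ide_tgt[OF c] ide_src[OF c] ft_ide[OF c] by fastforce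
qed

lemma gen_rrel: "(b, a) \<in> smash_gen C Y dY rY Z dZ \<Longrightarrow> \<exists>\<rho>. rrel \<rho> a b"
  unfolding gen_iff rrel_def by blast

lemma vok_upd:
  assumes "vok x \<theta> vs" "i0 < nt \<theta>" "b \<in> tens C Y dY Z dZ" "tdeg C b = tdeg C (vs i0)"
  shows "vok x \<theta> (vs(i0 := b))"
  using assms unfolding vok_def by auto

lemma H_step:
  assumes v: "vok x \<theta> vs" and i0: "i0 < nt \<theta>"
    and g: "(vs i0, b) \<in> smash_gen C Y dY rY Z dZ \<union> (smash_gen C Y dY rY Z dZ)\<inverse>"
  shows "Hraw x \<theta> vs = Hraw x \<theta> (vs(i0 := b))"
proof -
  have vi: "vs i0 \<in> tens C Y dY Z dZ" using v i0 unfolding vok_def by simp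
  have bm: "b \<in> tens C Y dY Z dZ \<and> tdeg C b = tdeg C (vs i0)"
    using g gen_mem[OF aY, of "vs i0" b] gen_mem[OF aY, of b "vs i0"] by auto
  have v2: "vok x \<theta> (vs(i0 := b))" using vok_upd[OF v i0] bm by simp
  have refl: "\<And>i. i < nt \<theta> \<Longrightarrow> \<exists>\<rho>. rrel \<rho> (vs i) (vs i)"
    using rrel_refl v unfolding vok_def by blast
  from g show ?thesis
  proof
    assume "(vs i0, b) \<in> smash_gen C Y dY rY Z dZ"
    then have r: "\<exists>\<rho>. rrel \<rho> b (vs i0)" by (rule gen_rrel)
    have "Hraw x \<theta> (vs(i0 := b)) = Hraw x \<theta> vs"
      by (rule H_gen[OF v2 v]) (use r refl in auto)
    then show ?thesis by simp
  next
    assume "(vs i0, b) \<in> (smash_gen C Y dY rY Z dZ)\<inverse>"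
    then have r: "\<exists>\<rho>. rrel \<rho> (vs i0) b" using gen_rrel by simp
    show ?thesis
      by (rule H_gen[OF v v2]) (use r refl in auto)
  qed
qed

lemma H_pointwise:
  assumes v: "vok x \<theta> vs" and e: "\<And>i. i < nt \<theta> \<Longrightarrow> (vs i, vs' i) \<in> smash_eq C Y dY rY Z dZ"
  shows "Hraw x \<theta> vs = Hraw x \<theta> vs'"
proof -
  let ?R = "smash_gen C Y dY rY Z dZ \<union> (smash_gen C Y dY rY Z dZ)\<inverse>"
  have fg: "\<forall>i<nt \<theta>. (vs i, vs' i) \<in> ?R\<^sup>*" using e unfolding smash_eq_E by blast
  have vh: "\<And>h. \<forall>j<nt \<theta>. (vs j, h j) \<in> ?R\<^sup>* \<Longrightarrow> vok x \<theta> h"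
  proof -
    fix h assume hh: "\<forall>j<nt \<theta>. (vs j, h j) \<in> ?R\<^sup>*"
    have "\<And>j. j < nt \<theta> \<Longrightarrow> h j \<in> tens C Y dY Z dZ \<and> tdeg C (h j) = tdeg C (vs j)"
      using E_mem[OF aY] hh v unfolding vok_def smash_eq_E by blast
    then show "vok x \<theta> h" using v unfolding vok_def by auto
  qed
  have "Hraw x \<theta> vs = Hraw x \<theta> (\<lambda>i. if i < nt \<theta> then vs' i else vs i)"
    by (rule pw_closure[OF fg]) (use H_step vh in blast)
  also have "\<dots> = Hraw x \<theta> vs'"
    by (rule Hraw_cong) (use vh fg in auto)
  finally show ?thesis .
qed

end

context opc begin
lemma rep_smash:
  assumes "actok X dX rX" "Q \<in> smash C X dX rX Y dY"
  shows "(SOME v. v \<in> Q) \<in> tens C X dX Y dY" "Q = smash_q C X dX rX Y dY (SOME v. v \<in> Q)"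
    "tdeg C (SOME v. v \<in> Q) = smash_deg C Q"
proof -
  obtain w where w: "w \<in> tens C X dX Y dY" "Q = smash_q C X dX rX Y dY w" using assms(2) smash_iff by blast
  show "(SOME v. v \<in> Q) \<in> tens C X dX Y dY" using rep_mem(1)[OF assms(1) w(1)] w(2) by simp
  show "Q = smash_q C X dX rX Y dY (SOME v. v \<in> Q)" using q_rep_q[of X dX rX Y dY w] w(2) by simp
  show "tdeg C (SOME v. v \<in> Q) = smash_deg C Q" unfolding smash_deg_def ..
qed
end

context hopf begin

lemma vok_reps:
  assumes "(x, \<theta>, ws) \<in> T2"
  shows "vok x \<theta> (\<lambda>i. SOME v. v \<in> ws i)"
proof -
  have h: "\<theta> \<in> mor C" "x \<in> X" "dX x = tgt C \<theta>" "ysok YZ (smash_deg C) \<theta> ws" using assms unfolding tens_iff by auto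
  have "\<And>i. i < nt \<theta> \<Longrightarrow> (SOME v. v \<in> ws i) \<in> tens C Y dY Z dZ \<and> tdeg C (SOME v. v \<in> ws i) = fib C \<theta> i"
  proof -
    fix i assume i: "i < nt \<theta>"
    have w: "ws i \<in> YZ" "smash_deg C (ws i) = fib C \<theta> i" using h(4) i unfolding ysok_def by auto
    show "(SOME v. v \<in> ws i) \<in> tens C Y dY Z dZ \<and> tdeg C (SOME v. v \<in> ws i) = fib C \<theta> i"
      using rep_smash(1,3)[OF aY w(1)] w(2) by simp
  qed
  then show ?thesis unfolding vok_def using h by auto
qed

lemma H_E2gen:
  assumes g: "(u1, u2) \<in> smash_gen C X dX rX YZ (smash_deg C)"
  shows "H u1 = H u2"
proof -
  obtain x \<psi> \<phi> ws where h: "x \<in> X" "\<psi> \<in> mor C" "dX x = tgt C \<psi>" "ft \<psi>" "\<phi> \<in> mor C"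
    "tgt C \<phi> = src C \<psi>" "ysok YZ (smash_deg C) \<phi> ws" "u1 = (ract rX x \<psi>, \<phi>, ws)" "u2 = (x, cmp C \<psi> \<phi>, pull \<psi> ws)"
    using g unfolding gen_iff by blast
  let ?x1 = "ract rX x \<psi>"
  let ?vs1 = "\<lambda>i. SOME v. v \<in> ws i" and ?vs2 = "\<lambda>i. SOME v. v \<in> pull \<psi> ws i"
  have u1m: "u1 \<in> T2" using gen_mem(1)[OF aX g] .
  have u2m: "u2 \<in> T2" using gen_mem(2)[OF aX g] .
  have v1: "vok ?x1 \<phi> ?vs1" using vok_reps u1m h(8) by simp
  have v2: "vok x (cmp C \<psi> \<phi>) ?vs2" using vok_reps u2m h(9) by simp
  let ?\<psi>B = "psiB \<phi> ?vs1" and ?\<phi>B = "phiB \<phi> ?vs1" and ?\<sigma> = "sig \<phi> ?vs1"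
  note fB = S_all(1)[OF v1]
  note fb = fact_basic[OF fB]
  have tB: "tgt C ?\<psi>B = src C \<psi>" using fb(7) h(6) by simp
  have ntpp: "nt (cmp C \<psi> \<phi>) = nt \<psi>" using cmp_tgt[OF h(5,2,6)] by simp
  have ntpB: "nt (cmp C \<psi> ?\<psi>B) = nt \<psi>" using cmp_tgt[OF fb(1) h(2) tB] by simp
  have ntphi: "nt \<phi> = ns \<psi>" using h(6) by simp
  let ?e = "\<lambda>i. en \<psi> i 0"
  have TTi: "\<And>i. i < nt \<psi> \<Longrightarrow> triv (fib C \<psi> i)" using h(4) unfolding ft_def' by simp
  have vs2e: "\<And>i. i < nt \<psi> \<Longrightarrow> ?vs2 i = ?vs1 (?e i)" unfolding pull_def by simp
  let ?g = "\<lambda>i. ?\<sigma> (?e i)"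
  have f2: "fact x (cmp C \<psi> \<phi>) ?vs2 (cmp C \<psi> ?\<psi>B) ?\<phi>B ?g"
    unfolding fact_def
  proof (intro conjI allI impI)
    show "cmp C \<psi> ?\<psi>B \<in> mor C" using cmp_mor[OF fb(1) h(2) tB] .
    show "?\<phi>B \<in> mor C" using fb(2) .
    show "tgt C ?\<phi>B = src C (cmp C \<psi> ?\<psi>B)" using fb(3) cmp_src[OF fb(1) h(2) tB] by simp
    show "cmp C (cmp C \<psi> ?\<psi>B) ?\<phi>B = cmp C \<psi> \<phi>" using cmp_assoc[OF fb(2,1) h(2) fb(3) tB] fb(4) by simp
    fix i assume i: "i < nt (cmp C \<psi> \<phi>)"
    have i': "i < nt \<psi>" using i ntpp by simp
    note T = TT[OF h(2) fb(1) tB i' TTi[OF i']]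
    have et: "?e i < nt \<phi>" using T(1) ntphi by simp
    note s = fb(8)[OF et]
    show "?g i \<in> mor C" using s by simp
    show "src C (?g i) = fib C (cmp C \<psi> ?\<psi>B) i" using s T(4) by simp
    show "tgt C (?g i) = dY (vy ?vs2 i)" using s vs2e[OF i'] by simp
    show "ft (?g i)" using s by simp
    show "cmp C (?g i) (fibm C (cmp C \<psi> ?\<psi>B) ?\<phi>B i) = vc ?vs2 i"
      using s T(5)[OF fb(2,3)] vs2e[OF i'] by simp
  qed
  have "H u2 = Hraw x (cmp C \<psi> \<phi>) ?vs2" unfolding H_def h(9) by simp
  also have "\<dots> = Phi x ?vs2 (cmp C \<psi> ?\<psi>B) ?\<phi>B ?g" unfolding Hraw_def using K[OF v2 f2] .
  also have "\<dots> = Phi ?x1 ?vs1 ?\<psi>B ?\<phi>B ?\<sigma>"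
  proof -
    have yok: "ysok Y dY ?\<psi>B (YG ?vs1 ?\<psi>B ?\<sigma>)" using Ptrip_mem(1)[OF v1 fB] unfolding tens_iff by simp
    have gg: "((?x1, ?\<psi>B, YG ?vs1 ?\<psi>B ?\<sigma>), (x, cmp C \<psi> ?\<psi>B, pull \<psi> (YG ?vs1 ?\<psi>B ?\<sigma>))) \<in> smash_gen C X dX rX Y dY"
      unfolding gen_iff using h(1-4) fb(1) tB yok by blast
    have py: "pull \<psi> (YG ?vs1 ?\<psi>B ?\<sigma>) = YG ?vs2 (cmp C \<psi> ?\<psi>B) ?g"
    proof
      fix i show "pull \<psi> (YG ?vs1 ?\<psi>B ?\<sigma>) i = YG ?vs2 (cmp C \<psi> ?\<psi>B) ?g i"
      proof (cases "i < nt \<psi>")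
        case True
        note T = TT[OF h(2) fb(1) tB True TTi[OF True]]
        have et: "?e i < nt ?\<psi>B" using T(1) tB by simp
        show ?thesis unfolding pull_def YG_def using True et ntpB vs2e[OF True] by simp
      next
        case False then show ?thesis unfolding pull_def YG_def using ntpB by simp
      qed
    qed
    have zg: "ZG ?vs2 (cmp C \<psi> ?\<psi>B) ?g ?\<phi>B = ZG ?vs1 ?\<psi>B ?\<sigma> ?\<phi>B"
    proof
      fix j show "ZG ?vs2 (cmp C \<psi> ?\<psi>B) ?g ?\<phi>B j = ZG ?vs1 ?\<psi>B ?\<sigma> ?\<phi>B j"
      proof (cases "j < nt ?\<phi>B")
        case True
        have jB: "j < ns ?\<psi>B" using True fb(3) by simp
        obtain i where i: "i = crdm C (cmp C \<psi> ?\<psi>B) j" by blast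
        have bj: "crdm C ?\<psi>B j < ns \<psi>" using crdm_lt[OF fb(1) jB] tB by simp
        have ii: "crdm C \<psi> (crdm C ?\<psi>B j) = i" using crdm_cmp[OF fb(1) h(2) tB jB] i by simp
        have i': "i < nt \<psi>" using crdm_lt[OF h(2) bj] ii by simp
        note T = TT[OF h(2) fb(1) tB i' TTi[OF i']]
        have ei: "crdm C ?\<psi>B j = ?e i" using T(3)[OF bj ii] .
        have rk: "rk ?\<psi>B (?e i) j = rk (cmp C \<psi> ?\<psi>B) i j" using T(7)[OF jB] .
        show ?thesis unfolding ZG_def using True i vs2e[OF i'] ei rk by simp
      next
        case False then show ?thesis unfolding ZG_def by simp
      qed
    qed
    show ?thesis unfolding Phi_def Ptrip_def zg py[symmetric] using q_gen[OF gg] by simp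
  qed
  also have "\<dots> = Hraw ?x1 \<phi> ?vs1" unfolding Hraw_def ..
  also have "\<dots> = H u1" unfolding H_def h(8) by simp
  finally show ?thesis by simp
qed

lemma H_E2:
  assumes "(u, u') \<in> smash_eq C X dX rX YZ (smash_deg C)"
  shows "H u = H u'"
  using assms unfolding smash_eq_E
proof (induction rule: rtrancl_induct)
  case base then show ?case by simp
next
  case (step b c)
  have "(b, c) \<in> smash_gen C X dX rX YZ (smash_deg C) \<or> (c, b) \<in> smash_gen C X dX rX YZ (smash_deg C)"
    using step(2) by auto
  then have "H b = H c" using H_E2gen by metis
  then show ?case using step(3) by simp
qed

lemma HF:
  assumes t: "t \<in> T1"
  shows "\<exists>u. u \<in> T2 \<and> F t = q2 u \<and> H u = q1 t"
proof -
  obtain Qxy \<phi> zs where tt: "t = (Qxy, \<phi>, zs)" by (cases t) blast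
  have h: "\<phi> \<in> mor C" "Qxy \<in> P" "smash_deg C Qxy = tgt C \<phi>" "ysok Z dZ \<phi> zs"
    using t unfolding tt tens_iff by auto
  note r = rep_P[OF h(2)]
  obtain x \<psi> ys where wx: "(SOME v. v \<in> Qxy) = (x, \<psi>, ys)" by (cases "SOME v. v \<in> Qxy") blast
  have w: "(x, \<psi>, ys) \<in> tens C X dX Y dY" "tgt C \<phi> = src C \<psi>" using r(1,3) h(3) wx by (auto simp: tdeg_simp)
  have wh: "\<psi> \<in> mor C" "x \<in> X" "dX x = tgt C \<psi>" "ysok Y dY \<psi> ys" using w(1) unfolding tens_iff by auto
  let ?vs0 = "\<lambda>i. (ys i, fibm C \<psi> \<phi> i, inz \<psi> zs i)"
  let ?u = "tmap C id qYZ (assoc C ((x, \<psi>, ys), \<phi>, zs))"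
  have um: "?u \<in> T2" using tassoc_mem(3)[OF aY w(1) h(1) w(2) h(4)] .
  have Ft: "F t = q2 ?u" unfolding F_def G_def tt using wx by simp
  have ue: "?u = (x, cmp C \<psi> \<phi>, \<lambda>i. if i < nt \<psi> then qYZ (?vs0 i) else undefined)"
    using tassoc_simp[OF wh(1) h(1) w(2)] .
  have ntpp: "nt (cmp C \<psi> \<phi>) = nt \<psi>" using cmp_tgt[OF h(1) wh(1) w(2)] by simp
  have cm: "cmp C \<psi> \<phi> \<in> mor C" using cmp_mor[OF h(1) wh(1) w(2)] .
  have v0: "vok x (cmp C \<psi> \<phi>) ?vs0" unfolding vok_def
    using wh cm cmp_tgt[OF h(1) wh(1) w(2)] ntpp tassoc_mem(1,2)[OF aY w(1) h(1) w(2) h(4)] by auto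
  have "H ?u = Hraw x (cmp C \<psi> \<phi>) (\<lambda>i. SOME v. v \<in> (if i < nt \<psi> then qYZ (?vs0 i) else undefined))"
    unfolding H_def ue by simp
  also have "\<dots> = Hraw x (cmp C \<psi> \<phi>) ?vs0"
  proof (rule sym, rule H_pointwise[OF v0])
    fix i assume "i < nt (cmp C \<psi> \<phi>)"
    then have i: "i < nt \<psi>" using ntpp by simp
    show "(?vs0 i, SOME v. v \<in> (if i < nt \<psi> then qYZ (?vs0 i) else undefined)) \<in> smash_eq C Y dY rY Z dZ"
      using q_rep[of "?vs0 i" Y dY rY Z dZ] i by simp
  qed
  also have "\<dots> = Phi x ?vs0 \<psi> \<phi> (\<lambda>i. ide C (fib C \<psi> i))"
  proof -
    have f: "fact x (cmp C \<psi> \<phi>) ?vs0 \<psi> \<phi> (\<lambda>i. ide C (fib C \<psi> i))"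
      unfolding fact_def
    proof (intro conjI allI impI)
      show "\<psi> \<in> mor C" "\<phi> \<in> mor C" "tgt C \<phi> = src C \<psi>" "cmp C \<psi> \<phi> = cmp C \<psi> \<phi>" using wh h w by auto
      fix i assume "i < nt (cmp C \<psi> \<phi>)"
      then have i: "i < nt \<psi>" using ntpp by simp
      have ob: "fib C \<psi> i \<in> ob C" using fib_ob[OF wh(1) i] .
      show "ide C (fib C \<psi> i) \<in> mor C" "src C (ide C (fib C \<psi> i)) = fib C \<psi> i"
        "ft (ide C (fib C \<psi> i))" using ide_mor[OF ob] ide_src[OF ob] ft_ide[OF ob] by auto
      show "tgt C (ide C (fib C \<psi> i)) = dY (vy ?vs0 i)" using ide_tgt[OF ob] wh(4) i unfolding ysok_def by simp
      show "cmp C (ide C (fib C \<psi> i)) (fibm C \<psi> \<phi> i) = vc ?vs0 i"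
        using cmp_ide_l[OF fibm_mor[OF wh(1) h(1) w(2) i]] fibm_tgt[OF wh(1) h(1) w(2) i] by simp
    qed
    show ?thesis unfolding Hraw_def using K[OF v0 f] .
  qed
  also have "\<dots> = q1 t"
  proof -
    have yg: "YG ?vs0 \<psi> (\<lambda>i. ide C (fib C \<psi> i)) = ys"
    proof
      fix i show "YG ?vs0 \<psi> (\<lambda>i. ide C (fib C \<psi> i)) i = ys i"
      proof (cases "i < nt \<psi>")
        case True
        have y: "ys i \<in> Y" "dY (ys i) = fib C \<psi> i" using wh(4) True unfolding ysok_def by auto
        show ?thesis unfolding YG_def using True M3[OF mY y(1)] y(2) by simp
      next
        case False then show ?thesis unfolding YG_def using wh(4) unfolding ysok_def by simp
      qed
    qed
    have zg: "ZG ?vs0 \<psi> (\<lambda>i. ide C (fib C \<psi> i)) \<phi> = zs"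
    proof
      fix j show "ZG ?vs0 \<psi> (\<lambda>i. ide C (fib C \<psi> i)) \<phi> j = zs j"
      proof (cases "j < nt \<phi>")
        case True
        have j': "j < ns \<psi>" using True w(2) by simp
        let ?i = "crdm C \<psi> j"
        have i: "?i < nt \<psi>" using crdm_lt[OF wh(1) j'] .
        have m: "rk \<psi> ?i j < crd C (fib C \<psi> ?i)" using rk_props(1)[OF wh(1) j'] .
        have ci: "crdm C (ide C (fib C \<psi> ?i)) (rk \<psi> ?i j) = rk \<psi> ?i j"
          using crdm_ide[OF fib_ob[OF wh(1) i] m] .
        show ?thesis unfolding ZG_def inz_def using True ci m rk_props(2)[OF wh(1) j'] by simp
      next
        case False then show ?thesis unfolding ZG_def using h(4) unfolding ysok_def by simp
      qed
    qed
    have "qXY (x, \<psi>, ys) = Qxy" using r(2) wx by simp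
    then show ?thesis unfolding Phi_def Ptrip_def yg zg tt by simp
  qed
  finally show ?thesis using um Ft by blast
qed

lemma surj:
  assumes u: "u \<in> T2"
  shows "\<exists>t \<in> T1. F t = q2 u"
proof -
  obtain x \<theta> ws where uu: "u = (x, \<theta>, ws)" by (cases u) blast
  have h: "\<theta> \<in> mor C" "x \<in> X" "dX x = tgt C \<theta>" "ysok YZ (smash_deg C) \<theta> ws" using u unfolding uu tens_iff by auto
  let ?vs = "\<lambda>i. SOME v. v \<in> ws i"
  have v: "vok x \<theta> ?vs" using vok_reps u uu by simp
  let ?\<psi>B = "psiB \<theta> ?vs" and ?\<phi>B = "phiB \<theta> ?vs" and ?\<sigma> = "sig \<theta> ?vs"
  note fB = S_all(1)[OF v]
  note fb = fact_basic[OF fB]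
  let ?t = "Ptrip x ?vs ?\<psi>B ?\<phi>B ?\<sigma>"
  have tm: "?t \<in> T1" using Ptrip_mem(3)[OF v fB] .
  have wB: "(x, ?\<psi>B, YG ?vs ?\<psi>B ?\<sigma>) \<in> tens C X dX Y dY" using Ptrip_mem(1)[OF v fB] .
  have zok: "ysok Z dZ ?\<phi>B (ZG ?vs ?\<psi>B ?\<sigma> ?\<phi>B)" using Ptrip_mem(2)[OF v fB] .
  have "F ?t = G (x, ?\<psi>B, YG ?vs ?\<psi>B ?\<sigma>) ?\<phi>B (ZG ?vs ?\<psi>B ?\<sigma> ?\<phi>B)"
    unfolding F_def Ptrip_def using L1_rep[OF wB fb(2) _ zok] fb(3) by (simp add: tdeg_simp)
  also have "\<dots> = q2 (x, \<theta>, \<lambda>i. if i < nt ?\<psi>B then qYZ (YG ?vs ?\<psi>B ?\<sigma> i, fibm C ?\<psi>B ?\<phi>B i,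
      inz ?\<psi>B (ZG ?vs ?\<psi>B ?\<sigma> ?\<phi>B) i) else undefined)"
    unfolding G_def tassoc_simp[OF fb(1,2,3)] fb(4) ..
  also have "\<dots> = q2 u"
  proof -
    have "(\<lambda>i. if i < nt ?\<psi>B then qYZ (YG ?vs ?\<psi>B ?\<sigma> i, fibm C ?\<psi>B ?\<phi>B i,
      inz ?\<psi>B (ZG ?vs ?\<psi>B ?\<sigma> ?\<phi>B) i) else undefined) = ws"
    proof
      fix i show "(if i < nt ?\<psi>B then qYZ (YG ?vs ?\<psi>B ?\<sigma> i, fibm C ?\<psi>B ?\<phi>B i,
        inz ?\<psi>B (ZG ?vs ?\<psi>B ?\<sigma> ?\<phi>B) i) else undefined) = ws i"
      proof (cases "i < nt \<theta>")
        case True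
        have iB: "i < nt ?\<psi>B" using True fb(5) by simp
        note vi = vokD[OF v True]
        note s = fb(8)[OF True]
        have wsi: "ws i \<in> YZ" using h(4) True unfolding ysok_def by simp
        have wq: "ws i = qYZ (?vs i)" using rep_smash(2)[OF aY wsi] .
        let ?\<beta> = "fibm C ?\<psi>B ?\<phi>B i" and ?z' = "inz ?\<psi>B (ZG ?vs ?\<psi>B ?\<sigma> ?\<phi>B) i"
        have \<beta>: "?\<beta> \<in> mor C" "tgt C ?\<beta> = src C (?\<sigma> i)"
          using fibm_mor[OF fb(1,2,3) iB] fibm_tgt[OF fb(1,2,3) iB] s by auto
        have zk: "ysok Z dZ ?\<beta> ?z'" using inz_ok[OF fb(1,2,3) zok iB] .
        have gg: "((ract rY (vy ?vs i) (?\<sigma> i), ?\<beta>, ?z'), (vy ?vs i, cmp C (?\<sigma> i) ?\<beta>, pull (?\<sigma> i) ?z'))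
           \<in> smash_gen C Y dY rY Z dZ"
          unfolding gen_iff
          apply (rule exI[of _ "vy ?vs i"], rule exI[of _ "?\<sigma> i"], rule exI[of _ "?\<beta>"], rule exI[of _ "?z'"])
          using vi(1) s \<beta> zk by simp
        have pz: "pull (?\<sigma> i) ?z' = vz ?vs i"
        proof
          fix k show "pull (?\<sigma> i) ?z' k = vz ?vs i k"
          proof (cases "k < nt (?\<sigma> i)")
            case True
            obtain m where m: "m = en (?\<sigma> i) k 0" by blast
            have mp: "m < ns (?\<sigma> i)" "crdm C (?\<sigma> i) m = k" using FTU(1)[of "?\<sigma> i" k] s True m by auto
            have ml: "m < crd C (fib C ?\<psi>B i)" using mp(1) s by simp
            obtain j where j: "j = en ?\<psi>B i m" by blast
            have jp: "j < ns ?\<psi>B" "crdm C ?\<psi>B j = i" "rk ?\<psi>B i j = m" using en_props[OF fb(1) iB ml] j by auto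
            have jn: "j < nt ?\<phi>B" using jp(1) fb(3) by simp
            have "pull (?\<sigma> i) ?z' k = ?z' m" unfolding pull_def using True m by simp
            also have "\<dots> = ZG ?vs ?\<psi>B ?\<sigma> ?\<phi>B j" unfolding inz_def using ml j by simp
            also have "\<dots> = vz ?vs i k" unfolding ZG_def using jn jp mp by simp
            finally show ?thesis .
          next
            case False
            have "nt (vc ?vs i) \<le> k" using False s vi(3) by simp
            then show ?thesis unfolding pull_def using False vi(4) unfolding ysok_def by simp
          qed
        qed
        have "?vs i = (vy ?vs i, cmp C (?\<sigma> i) ?\<beta>, pull (?\<sigma> i) ?z')" using pz s by simp
        then have "qYZ (ract rY (vy ?vs i) (?\<sigma> i), ?\<beta>, ?z') = ws i" using q_gen[OF gg] wq by simp
        then show ?thesis using iB unfolding YG_def by simp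
      next
        case False then show ?thesis using fb(5) h(4) unfolding ysok_def by simp
      qed
    qed
    then show ?thesis unfolding uu by simp
  qed
  finally show ?thesis using tm by blast
qed

lemma main:
  "bij_betw (smash_assoc C X dX rX Y dY rY Z dZ) (smash C P (smash_deg C) rP Z dZ) (smash C X dX rX YZ (smash_deg C))"
  unfolding bij_betw_def
proof
  show "inj_on (smash_assoc C X dX rX Y dY rY Z dZ) (smash C P (smash_deg C) rP Z dZ)"
  proof (rule inj_onI)
    fix Q Q' assume Q: "Q \<in> smash C P (smash_deg C) rP Z dZ" and Q': "Q' \<in> smash C P (smash_deg C) rP Z dZ"
      and eq: "smash_assoc C X dX rX Y dY rY Z dZ Q = smash_assoc C X dX rX Y dY rY Z dZ Q'"
    obtain t where t: "t \<in> T1" "Q = q1 t" using Q smash_iff by blast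
    obtain t' where t': "t' \<in> T1" "Q' = q1 t'" using Q' smash_iff by blast
    obtain u where u: "u \<in> T2" "F t = q2 u" "H u = q1 t" using HF[OF t(1)] by blast
    obtain u' where u': "u' \<in> T2" "F t' = q2 u'" "H u' = q1 t'" using HF[OF t'(1)] by blast
    have "F t = F t'" using eq SA[OF t(1)] SA[OF t'(1)] t(2) t'(2) by simp
    then have "(u, u') \<in> smash_eq C X dX rX YZ (smash_deg C)" using u(2) u'(2) q_eq by metis
    then have "H u = H u'" by (rule H_E2)
    then show "Q = Q'" using u(3) u'(3) t(2) t'(2) by simp
  qed
  show "smash_assoc C X dX rX Y dY rY Z dZ ` smash C P (smash_deg C) rP Z dZ = smash C X dX rX YZ (smash_deg C)"
  proof
    show "smash_assoc C X dX rX Y dY rY Z dZ ` smash C P (smash_deg C) rP Z dZ \<subseteq> smash C X dX rX YZ (smash_deg C)"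
    proof
      fix R assume "R \<in> smash_assoc C X dX rX Y dY rY Z dZ ` smash C P (smash_deg C) rP Z dZ"
      then obtain Q where Q: "Q \<in> smash C P (smash_deg C) rP Z dZ" "R = smash_assoc C X dX rX Y dY rY Z dZ Q" by blast
      obtain t where t: "t \<in> T1" "Q = q1 t" using Q(1) smash_iff by blast
      show "R \<in> smash C X dX rX YZ (smash_deg C)" using Q(2) t SA[OF t(1)] F_mem[OF t(1)] by simp
    qed
    show "smash C X dX rX YZ (smash_deg C) \<subseteq> smash_assoc C X dX rX Y dY rY Z dZ ` smash C P (smash_deg C) rP Z dZ"
    proof
      fix R assume "R \<in> smash C X dX rX YZ (smash_deg C)"
      then obtain u where u: "u \<in> T2" "R = q2 u" using smash_iff by blast
      obtain t where t: "t \<in> T1" "F t = q2 u" using surj[OF u(1)] by blast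
      have "q1 t \<in> smash C P (smash_deg C) rP Z dZ" using q_in_smash[OF t(1)] .
      moreover have "smash_assoc C X dX rX Y dY rY Z dZ (q1 t) = R" using SA[OF t(1)] t(2) u(2) by simp
      ultimately show "R \<in> smash_assoc C X dX rX Y dY rY Z dZ ` smash C P (smash_deg C) rP Z dZ" by blast
    qed
  qed
qed

end

theorem proposition9p8:
  fixes C :: "('o, 'm) opcat"
    and X :: "'a set" and dX :: "'a \<Rightarrow> 'o" and rX :: "('a \<times> 'm \<times> (nat \<Rightarrow> 'o)) \<Rightarrow> 'a"
    and Y :: "'b set" and dY :: "'b \<Rightarrow> 'o" and rY :: "('b \<times> 'm \<times> (nat \<Rightarrow> 'o)) \<Rightarrow> 'b"
    and Z :: "'c set" and dZ :: "'c \<Rightarrow> 'o" and rZ :: "('c \<times> 'm \<times> (nat \<Rightarrow> 'o)) \<Rightarrow> 'c"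
  assumes "operadic_category C"
    and "weak_right_adjoint_hyp C"
    and "rmodule C X dX rX"
    and "rmodule C Y dY rY"
    and "rmodule C Z dZ rZ"
  shows "bij_betw (smash_assoc C X dX rX Y dY rY Z dZ)
           (smash C (smash C X dX rX Y dY) (smash_deg C) (smash_act C X dX rX Y dY rY) Z dZ)
           (smash C X dX rX (smash C Y dY rY Z dZ) (smash_deg C))"
proof -
  interpret hopf C X dX rX Y dY rY Z dZ rZ
    by (unfold_locales) (use assms in auto)
  show ?thesis by (rule main)
qed

end
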